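(* Let $P$ be a continuous poset and $M$ a persistence module over $P$. Then $\underline{\underline M}\cong\underline M$, $\overline{\overline M}\cong\overline M$, $\underline{(\overline M)}\cong\underline M$ and $\overline{(\underline M)}\cong\overline M$. In particular $\underline M$ is upper semi-continuous and $\overline M$ is lower semi-continuous.
   Context: Let $P$ be a poset. A subset is directed if nonempty and any two elements have an upper bound in it. $x\ll y$ ($x$ way below $y$) means: for every directed $D$ whose supremum exists with $y\le\sup D$, some $d\in D$ satisfies $x\le d$. $P$ is continuous if for each $p$ the set $\{x:x\ll p\}$ is directed with supremum $p$. $k$ is a commutative ring with unity; a persistence module over $P$ is a functor $M$ from $P$ (as a category, $p\to q$ iff $p\le q$) to $k$-modules, with modules $M_p$ and internal maps $M(p\le q)$. Define persistence modules $\underline M_p=\varprojlim_{x\gg p}M_x$ and $\overline M_p=\varinjlim_{x\ll p}M_x$ (internal maps induced by universal properties); there are canonical morphisms $M\to\underline M$ and $\overline M\to M$. $M$ is upper semi-continuous if $M\to\underline M$ is an isomorphism, and lower semi-continuous if $\overline M\to M$ is an isomorphism. *)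

theory Defs
  imports Main "HOL-Algebra.Module"
begin

text \<open>The poset P is the ambient type 'p with its partial order (class order).\<close>

definition directed :: "'p::order set \<Rightarrow> bool" where
  "directed D \<longleftrightarrow> D \<noteq> {} \<and> (\<forall>a\<in>D. \<forall>b\<in>D. \<exists>c\<in>D. a \<le> c \<and> b \<le> c)"

definition is_sup :: "'p::order set \<Rightarrow> 'p \<Rightarrow> bool" where
  "is_sup D s \<longleftrightarrow> (\<forall>d\<in>D. d \<le> s) \<and> (\<forall>u. (\<forall>d\<in>D. d \<le> u) \<longrightarrow> s \<le> u)"

definition way_below :: "'p::order \<Rightarrow> 'p \<Rightarrow> bool" (infix \<open>\<lless>\<close> 50) where
  "x \<lless> y \<longleftrightarrow> (\<forall>D s. directed D \<longrightarrow> is_sup D s \<longrightarrow> y \<le> s \<longrightarrow> (\<exists>d\<in>D. x \<le> d))"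

definition continuous_poset :: "'p::order itself \<Rightarrow> bool" where
  "continuous_poset TYPE('p) \<longleftrightarrow>
     (\<forall>p::'p. directed {x. x \<lless> p} \<and> is_sup {x. x \<lless> p} p)"

text \<open>A persistence module over 'p with values in modules over the commutative ring R:
  a family of modules (all with carriers in a common type 'm) together with internal maps.\<close>

type_synonym ('p, 'k, 'm) pmod = "('p \<Rightarrow> ('k, 'm) module) \<times> ('p \<Rightarrow> 'p \<Rightarrow> 'm \<Rightarrow> 'm)"

definition mod_hom :: "('k, 'c) ring_scheme \<Rightarrow> ('k, 'm) module \<Rightarrow> ('k, 'n) module \<Rightarrow> ('m \<Rightarrow> 'n) \<Rightarrow> bool" where
  "mod_hom R A B f \<longleftrightarrow>
     (\<forall>a\<in>carrier A. f a \<in> carrier B) \<and>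
     (\<forall>a\<in>carrier A. \<forall>b\<in>carrier A. f (a \<oplus>\<^bsub>A\<^esub> b) = f a \<oplus>\<^bsub>B\<^esub> f b) \<and>
     (\<forall>r\<in>carrier R. \<forall>a\<in>carrier A. f (r \<odot>\<^bsub>A\<^esub> a) = r \<odot>\<^bsub>B\<^esub> f a)"

definition pers_mod :: "('k, 'c) ring_scheme \<Rightarrow> ('p::order, 'k, 'm) pmod \<Rightarrow> bool" where
  "pers_mod R M \<longleftrightarrow>
     (\<forall>p. module R (fst M p)) \<and>
     (\<forall>p q. p \<le> q \<longrightarrow> mod_hom R (fst M p) (fst M q) (snd M p q)) \<and>
     (\<forall>p. \<forall>a\<in>carrier (fst M p). snd M p p a = a) \<and>
     (\<forall>p q r. p \<le> q \<longrightarrow> q \<le> r \<longrightarrow>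
        (\<forall>a\<in>carrier (fst M p). snd M q r (snd M p q a) = snd M p r a))"

definition is_pm_iso :: "('k, 'c) ring_scheme \<Rightarrow> ('p::order, 'k, 'm) pmod \<Rightarrow> ('p, 'k, 'n) pmod
    \<Rightarrow> ('p \<Rightarrow> 'm \<Rightarrow> 'n) \<Rightarrow> bool" where
  "is_pm_iso R A B eta \<longleftrightarrow>
     (\<forall>p. mod_hom R (fst A p) (fst B p) (eta p) \<and>
          bij_betw (eta p) (carrier (fst A p)) (carrier (fst B p))) \<and>
     (\<forall>p q. p \<le> q \<longrightarrow> (\<forall>a\<in>carrier (fst A p). eta q (snd A p q a) = snd B p q (eta p a)))"

definition pm_isomorphic :: "('k, 'c) ring_scheme \<Rightarrow> ('p::order, 'k, 'm) pmod \<Rightarrow> ('p, 'k, 'n) pmod \<Rightarrow> bool" where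
  "pm_isomorphic R A B \<longleftrightarrow> (\<exists>eta. is_pm_iso R A B eta)"

text \<open>Inverse limit of the diagram M restricted to the full subposet I: compatible families,
  with pointwise operations (entries outside I are fixed to undefined).\<close>
definition inv_lim :: "('p::order, 'k, 'm) pmod \<Rightarrow> 'p set \<Rightarrow> ('k, 'p \<Rightarrow> 'm) module" where
  "inv_lim M I =
    \<lparr> carrier = {f. (\<forall>x\<in>I. f x \<in> carrier (fst M x)) \<and> (\<forall>x. x \<notin> I \<longrightarrow> f x = undefined) \<and>
                   (\<forall>x\<in>I. \<forall>y\<in>I. x \<le> y \<longrightarrow> snd M x y (f x) = f y)},
      monoid.mult = (\<lambda>f g. undefined), one = undefined,
      zero = (\<lambda>x. if x \<in> I then \<zero>\<^bsub>fst M x\<^esub> else undefined),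
      add = (\<lambda>f g x. if x \<in> I then f x \<oplus>\<^bsub>fst M x\<^esub> g x else undefined),
      smult = (\<lambda>r f x. if x \<in> I then r \<odot>\<^bsub>fst M x\<^esub> f x else undefined) \<rparr>"

definition upper :: "('p::order, 'k, 'm) pmod \<Rightarrow> ('p, 'k, 'p \<Rightarrow> 'm) pmod" where
  "upper M = (\<lambda>p. inv_lim M {x. p \<lless> x},
              \<lambda>p q f x. if q \<lless> x then f x else undefined)"

definition upper_unit :: "('p::order, 'k, 'm) pmod \<Rightarrow> 'p \<Rightarrow> 'm \<Rightarrow> ('p \<Rightarrow> 'm)" where
  "upper_unit M p a = (\<lambda>x. if p \<lless> x then snd M p x a else undefined)"

definition dsum :: "('p::order, 'k, 'm) pmod \<Rightarrow> 'p set \<Rightarrow> ('k, 'p \<Rightarrow> 'm) module" where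
  "dsum M J =
    \<lparr> carrier = {f. (\<forall>x\<in>J. f x \<in> carrier (fst M x)) \<and> (\<forall>x. x \<notin> J \<longrightarrow> f x = undefined) \<and>
                   finite {x\<in>J. f x \<noteq> \<zero>\<^bsub>fst M x\<^esub>}},
      monoid.mult = (\<lambda>f g. undefined), one = undefined,
      zero = (\<lambda>x. if x \<in> J then \<zero>\<^bsub>fst M x\<^esub> else undefined),
      add = (\<lambda>f g x. if x \<in> J then f x \<oplus>\<^bsub>fst M x\<^esub> g x else undefined),
      smult = (\<lambda>r f x. if x \<in> J then r \<odot>\<^bsub>fst M x\<^esub> f x else undefined) \<rparr>"

definition dsum_ins :: "('p::order, 'k, 'm) pmod \<Rightarrow> 'p set \<Rightarrow> 'p \<Rightarrow> 'm \<Rightarrow> ('p \<Rightarrow> 'm)" where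
  "dsum_ins M J x a = (\<lambda>y. if y = x then a else if y \<in> J then \<zero>\<^bsub>fst M y\<^esub> else undefined)"

definition dlim_rel :: "('k, 'c) ring_scheme \<Rightarrow> ('p::order, 'k, 'm) pmod \<Rightarrow> 'p set \<Rightarrow> ('p \<Rightarrow> 'm) set" where
  "dlim_rel R M J =
     \<Inter> {N. submodule N R (dsum M J) \<and>
            {dsum_ins M J x a \<ominus>\<^bsub>dsum M J\<^esub> dsum_ins M J y (snd M x y a) | x y a.
               x \<in> J \<and> y \<in> J \<and> x \<le> y \<and> a \<in> carrier (fst M x)} \<subseteq> N}"

definition dlim_cls :: "('k, 'c) ring_scheme \<Rightarrow> ('p::order, 'k, 'm) pmod \<Rightarrow> 'p set \<Rightarrow> ('p \<Rightarrow> 'm) \<Rightarrow> ('p \<Rightarrow> 'm) set" where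
  "dlim_cls R M J f = {g \<in> carrier (dsum M J). g \<ominus>\<^bsub>dsum M J\<^esub> f \<in> dlim_rel R M J}"

definition rep :: "'a set \<Rightarrow> 'a" where
  "rep A = (SOME f. f \<in> A)"

definition dir_lim :: "('k, 'c) ring_scheme \<Rightarrow> ('p::order, 'k, 'm) pmod \<Rightarrow> 'p set \<Rightarrow> ('k, ('p \<Rightarrow> 'm) set) module" where
  "dir_lim R M J =
    \<lparr> carrier = dlim_cls R M J ` carrier (dsum M J),
      monoid.mult = (\<lambda>A B. undefined), one = undefined,
      zero = dlim_cls R M J \<zero>\<^bsub>dsum M J\<^esub>,
      add = (\<lambda>A B. dlim_cls R M J (rep A \<oplus>\<^bsub>dsum M J\<^esub> rep B)),
      smult = (\<lambda>r A. dlim_cls R M J (r \<odot>\<^bsub>dsum M J\<^esub> rep A)) \<rparr>"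

definition lower :: "('k, 'c) ring_scheme \<Rightarrow> ('p::order, 'k, 'm) pmod \<Rightarrow> ('p, 'k, ('p \<Rightarrow> 'm) set) pmod" where
  "lower R M = (\<lambda>p. dir_lim R M {x. x \<lless> p},
                \<lambda>p q A. dlim_cls R M {x. x \<lless> q}
                   (\<lambda>x. if x \<lless> p then rep A x else if x \<lless> q then \<zero>\<^bsub>fst M x\<^esub> else undefined))"

definition lower_counit :: "('k, 'c) ring_scheme \<Rightarrow> ('p::order, 'k, 'm) pmod \<Rightarrow> 'p \<Rightarrow> ('p \<Rightarrow> 'm) set \<Rightarrow> 'm" where
  "lower_counit R M p A =
     finsum (fst M p) (\<lambda>x. snd M x p (rep A x)) {x. x \<lless> p \<and> rep A x \<noteq> \<zero>\<^bsub>fst M x\<^esub>}"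

definition upper_semicont :: "('k, 'c) ring_scheme \<Rightarrow> ('p::order, 'k, 'm) pmod \<Rightarrow> bool" where
  "upper_semicont R M \<longleftrightarrow> is_pm_iso R M (upper M) (upper_unit M)"

definition lower_semicont :: "('k, 'c) ring_scheme \<Rightarrow> ('p::order, 'k, 'm) pmod \<Rightarrow> bool" where
  "lower_semicont R M \<longleftrightarrow> is_pm_iso R (lower R M) M (lower_counit R M)"

end

theory Submission
  imports Defs
begin


section \<open>Poset facts\<close>

lemma wb_le: "x \<lless> y \<Longrightarrow> x \<le> (y::'p::order)"
proof -
  assume "x \<lless> y"
  moreover have "directed {y}" by (simp add: directed_def)
  moreover have "is_sup {y} y" by (simp add: is_sup_def)
  ultimately show ?thesis unfolding way_below_def by blast
qed

lemma wb_mono: "x \<le> x' \<Longrightarrow> x' \<lless> y \<Longrightarrow> y \<le> y' \<Longrightarrow> x \<lless> (y'::'p::order)"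
  unfolding way_below_def by (meson order_trans)

lemma wb_trans1: "x \<lless> y \<Longrightarrow> y \<le> y' \<Longrightarrow> x \<lless> (y'::'p::order)"
  using wb_mono by blast

lemma wb_trans2: "x \<le> x' \<Longrightarrow> x' \<lless> y \<Longrightarrow> x \<lless> (y::'p::order)"
  using wb_mono by blast

lemma wb_wb: "x \<lless> y \<Longrightarrow> y \<lless> z \<Longrightarrow> x \<lless> (z::'p::order)"
  using wb_le wb_trans2 by blast

locale cposet =
  assumes cont: "continuous_poset TYPE('p::order)"
begin

lemma dir: "directed {x::'p. x \<lless> p}"
  using cont unfolding continuous_poset_def by blast

lemma sup: "is_sup {x::'p. x \<lless> p} p"
  using cont unfolding continuous_poset_def by blast

lemma dir2: "x \<lless> p \<Longrightarrow> y \<lless> p \<Longrightarrow> \<exists>z. z \<lless> p \<and> x \<le> z \<and> y \<le> (z::'p)"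
  using dir[of p] unfolding directed_def by blast

lemma nonempty: "\<exists>x::'p. x \<lless> p"
  using dir[of p] unfolding directed_def by blast

lemma interp: assumes "x \<lless> (y::'p)" shows "\<exists>z. x \<lless> z \<and> z \<lless> y"
proof -
  define D where "D = {w::'p. \<exists>z. w \<lless> z \<and> z \<lless> y}"
  have "directed D" unfolding directed_def
  proof (intro conjI ballI)
    obtain z where z: "z \<lless> y" using nonempty by blast
    obtain w where "w \<lless> z" using nonempty by blast
    with z show "D \<noteq> {}" unfolding D_def by blast
  next
    fix a b assume "a \<in> D" "b \<in> D"
    then obtain z1 z2 where 1: "a \<lless> z1" "z1 \<lless> y" and 2: "b \<lless> z2" "z2 \<lless> y"
      unfolding D_def by blast
    obtain z3 where z3: "z3 \<lless> y" "z1 \<le> z3" "z2 \<le> z3" using dir2[OF 1(2) 2(2)] by blast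
    have "a \<lless> z3" "b \<lless> z3" using 1 2 z3 wb_trans1 by blast+
    then obtain w where "w \<lless> z3" "a \<le> w" "b \<le> w" using dir2 by blast
    with z3 show "\<exists>c\<in>D. a \<le> c \<and> b \<le> c" unfolding D_def by blast
  qed
  moreover have "is_sup D y" unfolding is_sup_def
  proof (intro conjI allI impI ballI)
    fix d assume "d \<in> D" then show "d \<le> y" unfolding D_def using wb_le order_trans by blast
  next
    fix u assume u: "\<forall>d\<in>D. d \<le> u"
    have "\<forall>z\<in>{x. x \<lless> y}. z \<le> u"
    proof
      fix z assume "z \<in> {x. x \<lless> y}"
      then have "\<forall>w\<in>{x. x \<lless> z}. w \<le> u" using u unfolding D_def by blast
      then show "z \<le> u" using sup[of z] unfolding is_sup_def by blast
    qed
    then show "y \<le> u" using sup[of y] unfolding is_sup_def by blast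
  qed
  ultimately obtain d where "d \<in> D" "x \<le> d" using assms unfolding way_below_def by blast
  then show ?thesis unfolding D_def using wb_trans2 by blast
qed

lemma interp2: assumes "x1 \<lless> (y::'p)" "x2 \<lless> y"
  shows "\<exists>z. x1 \<lless> z \<and> x2 \<lless> z \<and> z \<lless> y"
proof -
  obtain w1 w2 where "x1 \<lless> w1" "w1 \<lless> y" "x2 \<lless> w2" "w2 \<lless> y" using interp assms by blast
  moreover then obtain z where "z \<lless> y" "w1 \<le> z" "w2 \<le> z" using dir2 by blast
  ultimately show ?thesis using wb_trans1 by blast
qed

end


lemma mh_closed: "mod_hom R A B h \<Longrightarrow> a \<in> carrier A \<Longrightarrow> h a \<in> carrier B"
  unfolding mod_hom_def by blast

lemma mh_add: "mod_hom R A B h \<Longrightarrow> a \<in> carrier A \<Longrightarrow> b \<in> carrier A \<Longrightarrow> h (a \<oplus>\<^bsub>A\<^esub> b) = h a \<oplus>\<^bsub>B\<^esub> h b"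
  unfolding mod_hom_def by blast

lemma mh_smult: "mod_hom R A B h \<Longrightarrow> r \<in> carrier R \<Longrightarrow> a \<in> carrier A \<Longrightarrow> h (r \<odot>\<^bsub>A\<^esub> a) = r \<odot>\<^bsub>B\<^esub> h a"
  unfolding mod_hom_def by blast

lemma mh_zero:
  assumes A: "module R A" and B: "module R B" and h: "mod_hom R A B h"
  shows "h \<zero>\<^bsub>A\<^esub> = \<zero>\<^bsub>B\<^esub>"
proof -
  interpret A: module R A by (rule A)
  interpret B: module R B by (rule B)
  have "h (\<zero>\<^bsub>R\<^esub> \<odot>\<^bsub>A\<^esub> \<zero>\<^bsub>A\<^esub>) = \<zero>\<^bsub>R\<^esub> \<odot>\<^bsub>B\<^esub> h \<zero>\<^bsub>A\<^esub>"
    by (rule mh_smult[OF h]) simp_all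
  moreover have "h \<zero>\<^bsub>A\<^esub> \<in> carrier B" by (rule mh_closed[OF h]) simp
  ultimately show ?thesis by simp
qed


lemma mh_inv:
  assumes A: "module R A" and B: "module R B" and h: "mod_hom R A B h" and a: "a \<in> carrier A"
  shows "h (\<ominus>\<^bsub>A\<^esub> a) = \<ominus>\<^bsub>B\<^esub> h a"
proof -
  interpret A: module R A by (rule A)
  interpret B: module R B by (rule B)
  have ha: "h a \<in> carrier B" by (rule mh_closed[OF h a])
  have "\<ominus>\<^bsub>A\<^esub> a = (\<ominus>\<^bsub>R\<^esub> \<one>\<^bsub>R\<^esub>) \<odot>\<^bsub>A\<^esub> a" using a A.smult_l_minus[of "\<one>\<^bsub>R\<^esub>" a] by simp
  moreover have "\<ominus>\<^bsub>B\<^esub> h a = (\<ominus>\<^bsub>R\<^esub> \<one>\<^bsub>R\<^esub>) \<odot>\<^bsub>B\<^esub> h a" using ha B.smult_l_minus[of "\<one>\<^bsub>R\<^esub>" "h a"] by simp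
  moreover have "h ((\<ominus>\<^bsub>R\<^esub> \<one>\<^bsub>R\<^esub>) \<odot>\<^bsub>A\<^esub> a) = (\<ominus>\<^bsub>R\<^esub> \<one>\<^bsub>R\<^esub>) \<odot>\<^bsub>B\<^esub> h a"
    by (rule mh_smult[OF h _ a]) simp
  ultimately show ?thesis by simp
qed

lemma mh_minus:
  assumes A: "module R A" and B: "module R B" and h: "mod_hom R A B h" and a: "a \<in> carrier A" and b: "b \<in> carrier A"
  shows "h (a \<ominus>\<^bsub>A\<^esub> b) = h a \<ominus>\<^bsub>B\<^esub> h b"
proof -
  interpret A: module R A by (rule A)
  interpret B: module R B by (rule B)
  have "h (a \<ominus>\<^bsub>A\<^esub> b) = h (a \<oplus>\<^bsub>A\<^esub> \<ominus>\<^bsub>A\<^esub> b)" by (simp add: A.minus_eq)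
  also have "\<dots> = h a \<oplus>\<^bsub>B\<^esub> h (\<ominus>\<^bsub>A\<^esub> b)" by (rule mh_add[OF h a]) (simp add: b)
  also have "\<dots> = h a \<ominus>\<^bsub>B\<^esub> h b" by (simp add: mh_inv[OF A B h b] B.minus_eq)
  finally show ?thesis .
qed

lemma mh_finsum:
  assumes A: "module R A" and B: "module R B" and h: "mod_hom R A B h"
    and S: "finite S" and f: "f \<in> S \<rightarrow> carrier A"
  shows "h (finsum A f S) = finsum B (\<lambda>i. h (f i)) S"
  using S f
proof (induction S rule: finite_induct)
  case empty
  interpret A: module R A by (rule A)
  interpret B: module R B by (rule B)
  show ?case using mh_zero[OF A B h] by simp
next
  case (insert x F)
  interpret A: module R A by (rule A)
  interpret B: module R B by (rule B)
  have fF: "f \<in> F \<rightarrow> carrier A" "f x \<in> carrier A" using insert.prems by auto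
  have hF: "(\<lambda>i. h (f i)) \<in> F \<rightarrow> carrier B" "h (f x) \<in> carrier B" using fF mh_closed[OF h] by auto
  have "h (finsum A f (insert x F)) = h (f x \<oplus>\<^bsub>A\<^esub> finsum A f F)"
    using insert.hyps fF by (simp add: A.finsum_insert)
  also have "\<dots> = h (f x) \<oplus>\<^bsub>B\<^esub> h (finsum A f F)" by (rule mh_add[OF h fF(2) A.finsum_closed[OF fF(1)]])
  also have "\<dots> = h (f x) \<oplus>\<^bsub>B\<^esub> finsum B (\<lambda>i. h (f i)) F" using insert.IH fF by simp
  also have "\<dots> = finsum B (\<lambda>i. h (f i)) (insert x F)" using insert.hyps hF by (simp add: B.finsum_insert)
  finally show ?case .
qed

lemma mh_comp: "mod_hom R A B f \<Longrightarrow> mod_hom R B C g \<Longrightarrow> mod_hom R A C (\<lambda>a. g (f a))"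
  unfolding mod_hom_def by simp


context abelian_group begin
lemma ag_diff_self: "a \<in> carrier G \<Longrightarrow> a \<ominus> a = \<zero>"
  by (simp add: minus_eq r_neg)
lemma ag_diff_trans: "a \<in> carrier G \<Longrightarrow> b \<in> carrier G \<Longrightarrow> c \<in> carrier G \<Longrightarrow> (a \<ominus> b) \<oplus> (b \<ominus> c) = a \<ominus> c"
  by (simp add: minus_eq a_assoc[symmetric]) (simp add: a_assoc l_neg)
lemma ag_diff_swap: "a \<in> carrier G \<Longrightarrow> b \<in> carrier G \<Longrightarrow> \<ominus> (a \<ominus> b) = b \<ominus> a"
  by (simp add: minus_eq minus_add minus_minus a_comm)
lemma ag_diff_add: "a \<in> carrier G \<Longrightarrow> b \<in> carrier G \<Longrightarrow> c \<in> carrier G \<Longrightarrow> d \<in> carrier G \<Longrightarrow>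
   (a \<oplus> b) \<ominus> (c \<oplus> d) = (a \<ominus> c) \<oplus> (b \<ominus> d)"
  by (simp add: minus_eq minus_add a_ac)
lemma ag_diff_zero: "a \<in> carrier G \<Longrightarrow> a \<ominus> \<zero> = a"
  by (simp add: minus_eq)
lemma ag_diff_eq0: "a \<in> carrier G \<Longrightarrow> b \<in> carrier G \<Longrightarrow> a \<ominus> b = \<zero> \<longleftrightarrow> a = b"
  by (metis ag_diff_self add.inv_solve_right minus_eq r_zero zero_closed a_inv_closed)
end

lemma (in module) smult_diff: "r \<in> carrier R \<Longrightarrow> a \<in> carrier M \<Longrightarrow> b \<in> carrier M \<Longrightarrow>
   r \<odot>\<^bsub>M\<^esub> a \<ominus>\<^bsub>M\<^esub> r \<odot>\<^bsub>M\<^esub> b = r \<odot>\<^bsub>M\<^esub> (a \<ominus>\<^bsub>M\<^esub> b)"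
  by (simp add: M.minus_eq smult_r_distr smult_r_minus)

lemma (in module) sub_facts:
  assumes "submodule S R M"
  shows "S \<subseteq> carrier M" "\<zero>\<^bsub>M\<^esub> \<in> S" "\<And>a. a \<in> S \<Longrightarrow> \<ominus>\<^bsub>M\<^esub> a \<in> S"
    "\<And>a b. a \<in> S \<Longrightarrow> b \<in> S \<Longrightarrow> a \<oplus>\<^bsub>M\<^esub> b \<in> S"
    "\<And>r a. r \<in> carrier R \<Longrightarrow> a \<in> S \<Longrightarrow> r \<odot>\<^bsub>M\<^esub> a \<in> S"
    "\<And>a b. a \<in> S \<Longrightarrow> b \<in> S \<Longrightarrow> a \<ominus>\<^bsub>M\<^esub> b \<in> S"
proof -
  show "S \<subseteq> carrier M" using submoduleE(1)[OF assms] .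
  show "\<zero>\<^bsub>M\<^esub> \<in> S" using subgroup.one_closed[OF submodule.axioms(1)[OF assms]] by simp
  show i: "\<And>a. a \<in> S \<Longrightarrow> \<ominus>\<^bsub>M\<^esub> a \<in> S" using submoduleE(3)[OF assms] .
  show a: "\<And>a b. a \<in> S \<Longrightarrow> b \<in> S \<Longrightarrow> a \<oplus>\<^bsub>M\<^esub> b \<in> S" using submoduleE(5)[OF assms] .
  show "\<And>r a. r \<in> carrier R \<Longrightarrow> a \<in> S \<Longrightarrow> r \<odot>\<^bsub>M\<^esub> a \<in> S" using submoduleE(4)[OF assms] .
  show "\<And>a b. a \<in> S \<Longrightarrow> b \<in> S \<Longrightarrow> a \<ominus>\<^bsub>M\<^esub> b \<in> S"
    using i a submoduleE(1)[OF assms] by (metis M.minus_eq subsetD)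
qed

section \<open>Quotient modules\<close>

definition qc :: "('k, 'a) module \<Rightarrow> 'a set \<Rightarrow> 'a \<Rightarrow> 'a set" where
  "qc N S f = {g \<in> carrier N. g \<ominus>\<^bsub>N\<^esub> f \<in> S}"

definition quot :: "('k, 'a) module \<Rightarrow> 'a set \<Rightarrow> ('k, 'a set) module" where
  "quot N S =
    \<lparr> carrier = qc N S ` carrier N,
      monoid.mult = (\<lambda>A B. undefined), one = undefined,
      zero = qc N S \<zero>\<^bsub>N\<^esub>,
      add = (\<lambda>A B. qc N S (rep A \<oplus>\<^bsub>N\<^esub> rep B)),
      smult = (\<lambda>r A. qc N S (r \<odot>\<^bsub>N\<^esub> rep A)) \<rparr>"

locale qmod = module R N for R :: "('k, 'c) ring_scheme" and N :: "('k, 'a) module" +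
  fixes S assumes sub: "submodule S R N"
begin

lemmas SF = sub_facts[OF sub]

lemma qc_self: "f \<in> carrier N \<Longrightarrow> f \<in> qc N S f"
  unfolding qc_def using SF(2) by (simp add: ag_diff_self)

lemma qc_sub: "qc N S f \<subseteq> carrier N"
  unfolding qc_def by blast

lemma qc_eq: assumes "f \<in> carrier N" "g \<in> carrier N"
  shows "qc N S f = qc N S g \<longleftrightarrow> f \<ominus>\<^bsub>N\<^esub> g \<in> S"
proof
  assume "qc N S f = qc N S g"
  then show "f \<ominus>\<^bsub>N\<^esub> g \<in> S" using qc_self[OF assms(1)] unfolding qc_def by blast
next
  assume fg: "f \<ominus>\<^bsub>N\<^esub> g \<in> S"
  have gf: "g \<ominus>\<^bsub>N\<^esub> f \<in> S" using SF(3)[OF fg] ag_diff_swap assms by simp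
  show "qc N S f = qc N S g" unfolding qc_def
  proof (intro Collect_cong conj_cong refl iffI)
    fix h assume h: "h \<in> carrier N" and "h \<ominus>\<^bsub>N\<^esub> f \<in> S"
    then have "(h \<ominus>\<^bsub>N\<^esub> f) \<oplus>\<^bsub>N\<^esub> (f \<ominus>\<^bsub>N\<^esub> g) \<in> S" using SF(4) fg by blast
    then show "h \<ominus>\<^bsub>N\<^esub> g \<in> S" using ag_diff_trans h assms by simp
  next
    fix h assume h: "h \<in> carrier N" and "h \<ominus>\<^bsub>N\<^esub> g \<in> S"
    then have "(h \<ominus>\<^bsub>N\<^esub> g) \<oplus>\<^bsub>N\<^esub> (g \<ominus>\<^bsub>N\<^esub> f) \<in> S" using SF(4) gf by blast
    then show "h \<ominus>\<^bsub>N\<^esub> f \<in> S" using ag_diff_trans h assms by simp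
  qed
qed

lemma rep_qc: assumes "f \<in> carrier N"
  shows "rep (qc N S f) \<in> carrier N" "rep (qc N S f) \<ominus>\<^bsub>N\<^esub> f \<in> S" "qc N S (rep (qc N S f)) = qc N S f"
proof -
  have "rep (qc N S f) \<in> qc N S f" unfolding rep_def using qc_self[OF assms] by (rule someI)
  then show 1: "rep (qc N S f) \<in> carrier N" and 2: "rep (qc N S f) \<ominus>\<^bsub>N\<^esub> f \<in> S" unfolding qc_def by auto
  show "qc N S (rep (qc N S f)) = qc N S f" using qc_eq[OF 1 assms] 2 by simp
qed

lemma q_carrier: "carrier (quot N S) = qc N S ` carrier N"
  by (simp add: quot_def)

lemma q_zero: "\<zero>\<^bsub>quot N S\<^esub> = qc N S \<zero>\<^bsub>N\<^esub>"
  by (simp add: quot_def)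

lemma q_add: assumes f: "f \<in> carrier N" and g: "g \<in> carrier N"
  shows "qc N S f \<oplus>\<^bsub>quot N S\<^esub> qc N S g = qc N S (f \<oplus>\<^bsub>N\<^esub> g)"
proof -
  have "qc N S f \<oplus>\<^bsub>quot N S\<^esub> qc N S g = qc N S (rep (qc N S f) \<oplus>\<^bsub>N\<^esub> rep (qc N S g))"
    by (simp add: quot_def)
  also have "\<dots> = qc N S (f \<oplus>\<^bsub>N\<^esub> g)"
  proof (subst qc_eq)
    have "(rep (qc N S f) \<ominus>\<^bsub>N\<^esub> f) \<oplus>\<^bsub>N\<^esub> (rep (qc N S g) \<ominus>\<^bsub>N\<^esub> g) \<in> S"
      using SF(4) rep_qc f g by blast
    then show "rep (qc N S f) \<oplus>\<^bsub>N\<^esub> rep (qc N S g) \<ominus>\<^bsub>N\<^esub> (f \<oplus>\<^bsub>N\<^esub> g) \<in> S"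
      using ag_diff_add rep_qc f g by simp
  qed (use rep_qc f g in auto)
  finally show ?thesis .
qed

lemma q_smult: assumes r: "r \<in> carrier R" and f: "f \<in> carrier N"
  shows "r \<odot>\<^bsub>quot N S\<^esub> qc N S f = qc N S (r \<odot>\<^bsub>N\<^esub> f)"
proof -
  have "r \<odot>\<^bsub>quot N S\<^esub> qc N S f = qc N S (r \<odot>\<^bsub>N\<^esub> rep (qc N S f))"
    by (simp add: quot_def)
  also have "\<dots> = qc N S (r \<odot>\<^bsub>N\<^esub> f)"
  proof (subst qc_eq)
    show "r \<odot>\<^bsub>N\<^esub> rep (qc N S f) \<ominus>\<^bsub>N\<^esub> r \<odot>\<^bsub>N\<^esub> f \<in> S"
      using smult_diff[OF r rep_qc(1)[OF f] f] SF(5)[OF r rep_qc(2)[OF f]] by simp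
  qed (use rep_qc f r in auto)
  finally show ?thesis .
qed

lemma q_cases: assumes "A \<in> carrier (quot N S)" obtains f where "f \<in> carrier N" "A = qc N S f"
  using assms by (auto simp: q_carrier)

lemma q_in: "f \<in> carrier N \<Longrightarrow> qc N S f \<in> carrier (quot N S)"
  by (simp add: q_carrier)

lemma q_module: "module R (quot N S)"
proof (rule moduleI)
  show "cring R" by (rule R.is_cring)
  show "abelian_group (quot N S)"
  proof (rule abelian_groupI)
    fix x y assume "x \<in> carrier (quot N S)" "y \<in> carrier (quot N S)"
    then show "x \<oplus>\<^bsub>quot N S\<^esub> y \<in> carrier (quot N S)"
      by (elim q_cases) (simp add: q_add q_in)
  next
    show "\<zero>\<^bsub>quot N S\<^esub> \<in> carrier (quot N S)" by (simp add: q_zero q_in)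
  next
    fix x y z assume "x \<in> carrier (quot N S)" "y \<in> carrier (quot N S)" "z \<in> carrier (quot N S)"
    then show "x \<oplus>\<^bsub>quot N S\<^esub> y \<oplus>\<^bsub>quot N S\<^esub> z = x \<oplus>\<^bsub>quot N S\<^esub> (y \<oplus>\<^bsub>quot N S\<^esub> z)"
      by (elim q_cases) (simp add: q_add M.a_assoc)
  next
    fix x y assume "x \<in> carrier (quot N S)" "y \<in> carrier (quot N S)"
    then show "x \<oplus>\<^bsub>quot N S\<^esub> y = y \<oplus>\<^bsub>quot N S\<^esub> x"
      by (elim q_cases) (simp add: q_add M.a_comm)
  next
    fix x assume "x \<in> carrier (quot N S)"
    then show "\<zero>\<^bsub>quot N S\<^esub> \<oplus>\<^bsub>quot N S\<^esub> x = x"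
      by (elim q_cases) (simp add: q_add q_zero)
  next
    fix x assume "x \<in> carrier (quot N S)"
    then show "\<exists>y\<in>carrier (quot N S). y \<oplus>\<^bsub>quot N S\<^esub> x = \<zero>\<^bsub>quot N S\<^esub>"
    proof (elim q_cases)
      fix f assume f: "f \<in> carrier N" "x = qc N S f"
      show ?thesis
        by (rule bexI[of _ "qc N S (\<ominus>\<^bsub>N\<^esub> f)"]) (simp_all add: f q_add q_zero q_in M.l_neg)
    qed
  qed
next
  fix a x assume "a \<in> carrier R" "x \<in> carrier (quot N S)"
  then show "a \<odot>\<^bsub>quot N S\<^esub> x \<in> carrier (quot N S)"
    by (elim q_cases) (simp add: q_smult q_in)
next
  fix a b x assume "a \<in> carrier R" "b \<in> carrier R" "x \<in> carrier (quot N S)"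
  then show "(a \<oplus>\<^bsub>R\<^esub> b) \<odot>\<^bsub>quot N S\<^esub> x = a \<odot>\<^bsub>quot N S\<^esub> x \<oplus>\<^bsub>quot N S\<^esub> b \<odot>\<^bsub>quot N S\<^esub> x"
    by (elim q_cases) (simp add: q_smult q_add smult_l_distr)
next
  fix a x y assume "a \<in> carrier R" "x \<in> carrier (quot N S)" "y \<in> carrier (quot N S)"
  then show "a \<odot>\<^bsub>quot N S\<^esub> (x \<oplus>\<^bsub>quot N S\<^esub> y) = a \<odot>\<^bsub>quot N S\<^esub> x \<oplus>\<^bsub>quot N S\<^esub> a \<odot>\<^bsub>quot N S\<^esub> y"
    by (elim q_cases) (simp add: q_smult q_add smult_r_distr)
next
  fix a b x assume "a \<in> carrier R" "b \<in> carrier R" "x \<in> carrier (quot N S)"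
  then show "(a \<otimes>\<^bsub>R\<^esub> b) \<odot>\<^bsub>quot N S\<^esub> x = a \<odot>\<^bsub>quot N S\<^esub> (b \<odot>\<^bsub>quot N S\<^esub> x)"
    by (elim q_cases) (simp add: q_smult smult_assoc1)
next
  fix x assume "x \<in> carrier (quot N S)"
  then show "\<one>\<^bsub>R\<^esub> \<odot>\<^bsub>quot N S\<^esub> x = x"
    by (elim q_cases) (simp add: q_smult)
qed

lemma q_hom: "mod_hom R N (quot N S) (qc N S)"
  unfolding mod_hom_def by (simp add: q_in q_add q_smult)

lemma rep_in: assumes "A \<in> carrier (quot N S)"
  shows "rep A \<in> carrier N" "qc N S (rep A) = A"
  using assms by (auto elim!: q_cases simp: rep_qc)

lemma qc_zero_iff: "f \<in> carrier N \<Longrightarrow> qc N S f = \<zero>\<^bsub>quot N S\<^esub> \<longleftrightarrow> f \<in> S"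
  by (simp add: q_zero qc_eq ag_diff_zero)

end


locale pm =
  fixes R :: "'k ring" and M :: "('p::order, 'k, 'm) pmod"
  assumes cR: "cring R" and pmM: "pers_mod R M"
begin

lemma Mmod: "module R (fst M x)" using pmM unfolding pers_mod_def by simp
lemma Mag: "abelian_group (fst M x)" by (rule module.axioms(2)[OF Mmod])
lemma Mam: "abelian_monoid (fst M x)" by (rule abelian_group.axioms(1)[OF Mag])
lemma Mh: "x \<le> y \<Longrightarrow> mod_hom R (fst M x) (fst M y) (snd M x y)" using pmM unfolding pers_mod_def by simp
lemma Mid: "a \<in> carrier (fst M x) \<Longrightarrow> snd M x x a = a" using pmM unfolding pers_mod_def by simp
lemma Mcomp: "x \<le> y \<Longrightarrow> y \<le> z \<Longrightarrow> a \<in> carrier (fst M x) \<Longrightarrow> snd M y z (snd M x y a) = snd M x z a"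
  using pmM unfolding pers_mod_def by simp

lemma Mh_closed: "x \<le> y \<Longrightarrow> a \<in> carrier (fst M x) \<Longrightarrow> snd M x y a \<in> carrier (fst M y)"
  by (rule mh_closed[OF Mh])
lemma Mh_add: "x \<le> y \<Longrightarrow> a \<in> carrier (fst M x) \<Longrightarrow> b \<in> carrier (fst M x) \<Longrightarrow>
   snd M x y (a \<oplus>\<^bsub>fst M x\<^esub> b) = snd M x y a \<oplus>\<^bsub>fst M y\<^esub> snd M x y b"
  by (rule mh_add[OF Mh])
lemma Mh_smult: "x \<le> y \<Longrightarrow> r \<in> carrier R \<Longrightarrow> a \<in> carrier (fst M x) \<Longrightarrow>
   snd M x y (r \<odot>\<^bsub>fst M x\<^esub> a) = r \<odot>\<^bsub>fst M y\<^esub> snd M x y a"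
  by (rule mh_smult[OF Mh])
lemma Mh_zero: "x \<le> y \<Longrightarrow> snd M x y \<zero>\<^bsub>fst M x\<^esub> = \<zero>\<^bsub>fst M y\<^esub>"
  by (rule mh_zero[OF Mmod Mmod Mh])
lemma Mh_inv: "x \<le> y \<Longrightarrow> a \<in> carrier (fst M x) \<Longrightarrow> snd M x y (\<ominus>\<^bsub>fst M x\<^esub> a) = \<ominus>\<^bsub>fst M y\<^esub> snd M x y a"
  by (rule mh_inv[OF Mmod Mmod Mh])

lemma M_add_closed: "a \<in> carrier (fst M x) \<Longrightarrow> b \<in> carrier (fst M x) \<Longrightarrow> a \<oplus>\<^bsub>fst M x\<^esub> b \<in> carrier (fst M x)"
  by (rule abelian_monoid.a_closed[OF Mam])
lemma M_zero_closed: "\<zero>\<^bsub>fst M x\<^esub> \<in> carrier (fst M x)"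
  by (rule abelian_monoid.zero_closed[OF Mam])
lemma M_inv_closed: "a \<in> carrier (fst M x) \<Longrightarrow> \<ominus>\<^bsub>fst M x\<^esub> a \<in> carrier (fst M x)"
  by (rule abelian_group.a_inv_closed[OF Mag])
lemma M_smult_closed: "r \<in> carrier R \<Longrightarrow> a \<in> carrier (fst M x) \<Longrightarrow> r \<odot>\<^bsub>fst M x\<^esub> a \<in> carrier (fst M x)"
  by (rule module.smult_closed[OF Mmod])

lemmas M_closed = M_add_closed M_zero_closed M_inv_closed M_smult_closed Mh_closed

section \<open>Inverse limits\<close>

lemma il_carrier: "f \<in> carrier (inv_lim M I) \<longleftrightarrow>
   (\<forall>x\<in>I. f x \<in> carrier (fst M x)) \<and> (\<forall>x. x \<notin> I \<longrightarrow> f x = undefined) \<and>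
   (\<forall>x\<in>I. \<forall>y\<in>I. x \<le> y \<longrightarrow> snd M x y (f x) = f y)"
  by (simp add: inv_lim_def)

lemma il_zero: "\<zero>\<^bsub>inv_lim M I\<^esub> = (\<lambda>x. if x \<in> I then \<zero>\<^bsub>fst M x\<^esub> else undefined)"
  by (simp add: inv_lim_def)
lemma il_add: "f \<oplus>\<^bsub>inv_lim M I\<^esub> g = (\<lambda>x. if x \<in> I then f x \<oplus>\<^bsub>fst M x\<^esub> g x else undefined)"
  by (simp add: inv_lim_def)
lemma il_smult: "r \<odot>\<^bsub>inv_lim M I\<^esub> f = (\<lambda>x. if x \<in> I then r \<odot>\<^bsub>fst M x\<^esub> f x else undefined)"
  by (simp add: inv_lim_def)

lemma il_module: "module R (inv_lim M I)"
proof (rule moduleI)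
  show "cring R" by (rule cR)
  show "abelian_group (inv_lim M I)"
  proof (rule abelian_groupI)
    fix f g assume "f \<in> carrier (inv_lim M I)" "g \<in> carrier (inv_lim M I)"
    then show "f \<oplus>\<^bsub>inv_lim M I\<^esub> g \<in> carrier (inv_lim M I)"
      by (auto simp: il_carrier il_add M_closed Mh_add)
  next
    show "\<zero>\<^bsub>inv_lim M I\<^esub> \<in> carrier (inv_lim M I)"
      by (auto simp: il_carrier il_zero M_closed Mh_zero)
  next
    fix f g h assume "f \<in> carrier (inv_lim M I)" "g \<in> carrier (inv_lim M I)" "h \<in> carrier (inv_lim M I)"
    then show "f \<oplus>\<^bsub>inv_lim M I\<^esub> g \<oplus>\<^bsub>inv_lim M I\<^esub> h = f \<oplus>\<^bsub>inv_lim M I\<^esub> (g \<oplus>\<^bsub>inv_lim M I\<^esub> h)"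
      by (auto simp: il_carrier il_add abelian_monoid.a_assoc[OF Mam])
  next
    fix f g assume "f \<in> carrier (inv_lim M I)" "g \<in> carrier (inv_lim M I)"
    then show "f \<oplus>\<^bsub>inv_lim M I\<^esub> g = g \<oplus>\<^bsub>inv_lim M I\<^esub> f"
      by (auto simp: il_carrier il_add abelian_monoid.a_comm[OF Mam])
  next
    fix f assume "f \<in> carrier (inv_lim M I)"
    then show "\<zero>\<^bsub>inv_lim M I\<^esub> \<oplus>\<^bsub>inv_lim M I\<^esub> f = f"
      by (auto simp: il_carrier il_add il_zero abelian_monoid.l_zero[OF Mam])
  next
    fix f assume f: "f \<in> carrier (inv_lim M I)"
    show "\<exists>g\<in>carrier (inv_lim M I). g \<oplus>\<^bsub>inv_lim M I\<^esub> f = \<zero>\<^bsub>inv_lim M I\<^esub>"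
      by (rule bexI[of _ "\<lambda>x. if x \<in> I then \<ominus>\<^bsub>fst M x\<^esub> f x else undefined"])
        (use f in \<open>auto simp: il_carrier il_add il_zero M_closed Mh_inv abelian_group.l_neg[OF Mag]\<close>)
  qed
next
  fix a f assume "a \<in> carrier R" "f \<in> carrier (inv_lim M I)"
  then show "a \<odot>\<^bsub>inv_lim M I\<^esub> f \<in> carrier (inv_lim M I)"
    by (auto simp: il_carrier il_smult M_closed Mh_smult)
next
  fix a b f assume "a \<in> carrier R" "b \<in> carrier R" "f \<in> carrier (inv_lim M I)"
  then show "(a \<oplus>\<^bsub>R\<^esub> b) \<odot>\<^bsub>inv_lim M I\<^esub> f = a \<odot>\<^bsub>inv_lim M I\<^esub> f \<oplus>\<^bsub>inv_lim M I\<^esub> b \<odot>\<^bsub>inv_lim M I\<^esub> f"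
    by (auto simp: il_carrier il_smult il_add module.smult_l_distr[OF Mmod])
next
  fix a f g assume "a \<in> carrier R" "f \<in> carrier (inv_lim M I)" "g \<in> carrier (inv_lim M I)"
  then show "a \<odot>\<^bsub>inv_lim M I\<^esub> (f \<oplus>\<^bsub>inv_lim M I\<^esub> g) = a \<odot>\<^bsub>inv_lim M I\<^esub> f \<oplus>\<^bsub>inv_lim M I\<^esub> a \<odot>\<^bsub>inv_lim M I\<^esub> g"
    by (auto simp: il_carrier il_smult il_add module.smult_r_distr[OF Mmod])
next
  fix a b f assume "a \<in> carrier R" "b \<in> carrier R" "f \<in> carrier (inv_lim M I)"
  then show "(a \<otimes>\<^bsub>R\<^esub> b) \<odot>\<^bsub>inv_lim M I\<^esub> f = a \<odot>\<^bsub>inv_lim M I\<^esub> (b \<odot>\<^bsub>inv_lim M I\<^esub> f)"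
    by (auto simp: il_carrier il_smult module.smult_assoc1[OF Mmod])
next
  fix f assume "f \<in> carrier (inv_lim M I)"
  then show "\<one>\<^bsub>R\<^esub> \<odot>\<^bsub>inv_lim M I\<^esub> f = f"
    by (auto simp: il_carrier il_smult module.smult_one[OF Mmod])
qed

end


context pm begin

lemma M_inv_zero: "\<ominus>\<^bsub>fst M x\<^esub> \<zero>\<^bsub>fst M x\<^esub> = \<zero>\<^bsub>fst M x\<^esub>"
proof -
  interpret Mx: abelian_group "fst M x" by (rule Mag)
  show ?thesis by (rule Mx.minus_equality) simp_all
qed

lemma up_fst: "fst (upper M) p = inv_lim M {x. p \<lless> x}" by (simp add: upper_def)
lemma up_snd: "snd (upper M) p q f = (\<lambda>x. if q \<lless> x then f x else undefined)" by (simp add: upper_def)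

lemma upper_pm: "pers_mod R (upper M)"
  unfolding pers_mod_def
proof (intro conjI allI impI ballI)
  fix p show "module R (fst (upper M) p)" by (simp add: up_fst il_module)
next
  fix p q :: 'p assume pq: "p \<le> q"
  have sub: "\<And>x. q \<lless> x \<Longrightarrow> p \<lless> x" using pq wb_trans2 by blast
  show "mod_hom R (fst (upper M) p) (fst (upper M) q) (snd (upper M) p q)"
    unfolding mod_hom_def
  proof (intro conjI ballI)
    fix f assume "f \<in> carrier (fst (upper M) p)"
    then show "snd (upper M) p q f \<in> carrier (fst (upper M) q)"
      by (simp add: up_fst up_snd il_carrier sub)
  next
    fix f g assume "f \<in> carrier (fst (upper M) p)" "g \<in> carrier (fst (upper M) p)"
    show "snd (upper M) p q (f \<oplus>\<^bsub>fst (upper M) p\<^esub> g) =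
          snd (upper M) p q f \<oplus>\<^bsub>fst (upper M) q\<^esub> snd (upper M) p q g"
      by (rule ext) (simp add: up_fst up_snd il_add sub)
  next
    fix r f assume "r \<in> carrier R" "f \<in> carrier (fst (upper M) p)"
    show "snd (upper M) p q (r \<odot>\<^bsub>fst (upper M) p\<^esub> f) = r \<odot>\<^bsub>fst (upper M) q\<^esub> snd (upper M) p q f"
      by (rule ext) (simp add: up_fst up_snd il_smult sub)
  qed
next
  fix p and f assume "f \<in> carrier (fst (upper M) p)"
  then show "snd (upper M) p p f = f"
    by (intro ext) (simp add: up_fst up_snd il_carrier)
next
  fix p q r :: 'p and f assume "p \<le> q" "q \<le> r" "f \<in> carrier (fst (upper M) p)"
  then have "\<And>x. r \<lless> x \<Longrightarrow> q \<lless> x" using wb_trans2 by blast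
  then show "snd (upper M) q r (snd (upper M) p q f) = snd (upper M) p r f"
    by (intro ext) (simp add: up_snd)
qed

lemma upper_is_pm: "pm R (upper M)"
  by (rule pm.intro[OF cR upper_pm])

lemma unit_in: assumes a: "a \<in> carrier (fst M p)"
  shows "upper_unit M p a \<in> carrier (fst (upper M) p)"
  unfolding up_fst il_carrier
proof (intro conjI ballI allI impI)
  fix x assume "x \<in> {x. p \<lless> x}"
  then show "upper_unit M p a x \<in> carrier (fst M x)"
    using a by (simp add: upper_unit_def Mh_closed[OF wb_le])
next
  fix x assume "x \<notin> {x. p \<lless> x}" then show "upper_unit M p a x = undefined"
    by (simp add: upper_unit_def)
next
  fix x y assume "x \<in> {x. p \<lless> x}" "y \<in> {x. p \<lless> x}" "x \<le> y"
  then show "snd M x y (upper_unit M p a x) = upper_unit M p a y"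
    using a by (simp add: upper_unit_def Mcomp[OF wb_le])
qed

section \<open>Direct sums\<close>

lemma ds_carrier: "f \<in> carrier (dsum M J) \<longleftrightarrow>
   (\<forall>x\<in>J. f x \<in> carrier (fst M x)) \<and> (\<forall>x. x \<notin> J \<longrightarrow> f x = undefined) \<and>
   finite {x\<in>J. f x \<noteq> \<zero>\<^bsub>fst M x\<^esub>}"
  by (simp add: dsum_def)
lemma ds_zero: "\<zero>\<^bsub>dsum M J\<^esub> = (\<lambda>x. if x \<in> J then \<zero>\<^bsub>fst M x\<^esub> else undefined)"
  by (simp add: dsum_def)
lemma ds_add: "f \<oplus>\<^bsub>dsum M J\<^esub> g = (\<lambda>x. if x \<in> J then f x \<oplus>\<^bsub>fst M x\<^esub> g x else undefined)"
  by (simp add: dsum_def)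
lemma ds_smult: "r \<odot>\<^bsub>dsum M J\<^esub> f = (\<lambda>x. if x \<in> J then r \<odot>\<^bsub>fst M x\<^esub> f x else undefined)"
  by (simp add: dsum_def)

definition supp :: "'p set \<Rightarrow> ('p \<Rightarrow> 'm) \<Rightarrow> 'p set" where
  "supp J f = {x\<in>J. f x \<noteq> \<zero>\<^bsub>fst M x\<^esub>}"

lemma ds_carrierI: "(\<And>x. x \<in> J \<Longrightarrow> f x \<in> carrier (fst M x)) \<Longrightarrow> (\<And>x. x \<notin> J \<Longrightarrow> f x = undefined) \<Longrightarrow>
  finite (supp J f) \<Longrightarrow> f \<in> carrier (dsum M J)"
  by (simp add: ds_carrier supp_def)

lemma ds_carrierD: "f \<in> carrier (dsum M J) \<Longrightarrow> x \<in> J \<Longrightarrow> f x \<in> carrier (fst M x)"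
  "f \<in> carrier (dsum M J) \<Longrightarrow> x \<notin> J \<Longrightarrow> f x = undefined"
  "f \<in> carrier (dsum M J) \<Longrightarrow> finite (supp J f)"
  by (simp_all add: ds_carrier supp_def)

lemma ds_module: "module R (dsum M J)"
proof (rule moduleI)
  show "cring R" by (rule cR)
  show "abelian_group (dsum M J)"
  proof (rule abelian_groupI)
    fix f g assume f: "f \<in> carrier (dsum M J)" and g: "g \<in> carrier (dsum M J)"
    show "f \<oplus>\<^bsub>dsum M J\<^esub> g \<in> carrier (dsum M J)"
    proof (rule ds_carrierI)
      have "supp J (f \<oplus>\<^bsub>dsum M J\<^esub> g) \<subseteq> supp J f \<union> supp J g"
        by (auto simp: supp_def ds_add abelian_monoid.l_zero[OF Mam] M_closed)
      then show "finite (supp J (f \<oplus>\<^bsub>dsum M J\<^esub> g))"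
        using ds_carrierD(3)[OF f] ds_carrierD(3)[OF g] finite_subset by blast
    qed (simp_all add: ds_add ds_carrierD[OF f] ds_carrierD[OF g] M_closed)
  next
    show "\<zero>\<^bsub>dsum M J\<^esub> \<in> carrier (dsum M J)"
      by (rule ds_carrierI) (simp_all add: ds_zero M_closed supp_def)
  next
    fix f g h assume "f \<in> carrier (dsum M J)" "g \<in> carrier (dsum M J)" "h \<in> carrier (dsum M J)"
    then show "f \<oplus>\<^bsub>dsum M J\<^esub> g \<oplus>\<^bsub>dsum M J\<^esub> h = f \<oplus>\<^bsub>dsum M J\<^esub> (g \<oplus>\<^bsub>dsum M J\<^esub> h)"
      by (intro ext) (simp add: ds_add ds_carrierD abelian_monoid.a_assoc[OF Mam])
  next
    fix f g assume "f \<in> carrier (dsum M J)" "g \<in> carrier (dsum M J)"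
    then show "f \<oplus>\<^bsub>dsum M J\<^esub> g = g \<oplus>\<^bsub>dsum M J\<^esub> f"
      by (intro ext) (simp add: ds_add ds_carrierD abelian_monoid.a_comm[OF Mam])
  next
    fix f assume "f \<in> carrier (dsum M J)"
    then show "\<zero>\<^bsub>dsum M J\<^esub> \<oplus>\<^bsub>dsum M J\<^esub> f = f"
      by (intro ext) (simp add: ds_add ds_zero ds_carrierD abelian_monoid.l_zero[OF Mam])
  next
    fix f assume f: "f \<in> carrier (dsum M J)"
    define g where "g = (\<lambda>x. if x \<in> J then \<ominus>\<^bsub>fst M x\<^esub> f x else undefined)"
    have "g \<in> carrier (dsum M J)"
    proof (rule ds_carrierI)
      have "supp J g \<subseteq> supp J f"
        by (auto simp: supp_def g_def M_inv_zero )
      then show "finite (supp J g)" using ds_carrierD(3)[OF f] finite_subset by blast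
    qed (simp_all add: g_def ds_carrierD[OF f] M_closed)
    moreover have "g \<oplus>\<^bsub>dsum M J\<^esub> f = \<zero>\<^bsub>dsum M J\<^esub>"
      by (intro ext) (simp add: g_def ds_add ds_zero ds_carrierD[OF f] abelian_group.l_neg[OF Mag])
    ultimately show "\<exists>g\<in>carrier (dsum M J). g \<oplus>\<^bsub>dsum M J\<^esub> f = \<zero>\<^bsub>dsum M J\<^esub>" by blast
  qed
next
  fix a f assume a: "a \<in> carrier R" and f: "f \<in> carrier (dsum M J)"
  show "a \<odot>\<^bsub>dsum M J\<^esub> f \<in> carrier (dsum M J)"
  proof (rule ds_carrierI)
    have "supp J (a \<odot>\<^bsub>dsum M J\<^esub> f) \<subseteq> supp J f"
      using a by (auto simp: supp_def ds_smult module.smult_r_null[OF Mmod])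
    then show "finite (supp J (a \<odot>\<^bsub>dsum M J\<^esub> f))" using ds_carrierD(3)[OF f] finite_subset by blast
  qed (simp_all add: a ds_smult ds_carrierD[OF f] M_closed)
next
  fix a b f assume "a \<in> carrier R" "b \<in> carrier R" "f \<in> carrier (dsum M J)"
  then show "(a \<oplus>\<^bsub>R\<^esub> b) \<odot>\<^bsub>dsum M J\<^esub> f = a \<odot>\<^bsub>dsum M J\<^esub> f \<oplus>\<^bsub>dsum M J\<^esub> b \<odot>\<^bsub>dsum M J\<^esub> f"
    by (intro ext) (simp add: ds_smult ds_add ds_carrierD module.smult_l_distr[OF Mmod])
next
  fix a f g assume "a \<in> carrier R" "f \<in> carrier (dsum M J)" "g \<in> carrier (dsum M J)"
  then show "a \<odot>\<^bsub>dsum M J\<^esub> (f \<oplus>\<^bsub>dsum M J\<^esub> g) = a \<odot>\<^bsub>dsum M J\<^esub> f \<oplus>\<^bsub>dsum M J\<^esub> a \<odot>\<^bsub>dsum M J\<^esub> g"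
    by (intro ext) (simp add: ds_smult ds_add ds_carrierD module.smult_r_distr[OF Mmod])
next
  fix a b f assume "a \<in> carrier R" "b \<in> carrier R" "f \<in> carrier (dsum M J)"
  then show "(a \<otimes>\<^bsub>R\<^esub> b) \<odot>\<^bsub>dsum M J\<^esub> f = a \<odot>\<^bsub>dsum M J\<^esub> (b \<odot>\<^bsub>dsum M J\<^esub> f)"
    by (intro ext) (simp add: ds_smult ds_carrierD module.smult_assoc1[OF Mmod])
next
  fix f assume "f \<in> carrier (dsum M J)"
  then show "\<one>\<^bsub>R\<^esub> \<odot>\<^bsub>dsum M J\<^esub> f = f"
    by (intro ext) (simp add: ds_smult ds_carrierD module.smult_one[OF Mmod])
qed

lemma ds_inv: "f \<in> carrier (dsum M J) \<Longrightarrow> \<ominus>\<^bsub>dsum M J\<^esub> f = (\<lambda>x. if x \<in> J then \<ominus>\<^bsub>fst M x\<^esub> f x else undefined)"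
proof -
  assume f: "f \<in> carrier (dsum M J)"
  interpret D: module R "dsum M J" by (rule ds_module)
  define g where "g = (\<lambda>x. if x \<in> J then \<ominus>\<^bsub>fst M x\<^esub> f x else undefined)"
  have gc: "g \<in> carrier (dsum M J)"
  proof (rule ds_carrierI)
    have "supp J g \<subseteq> supp J f"
      by (auto simp: supp_def g_def M_inv_zero )
    then show "finite (supp J g)" using ds_carrierD(3)[OF f] finite_subset by blast
  qed (simp_all add: g_def ds_carrierD[OF f] M_closed)
  moreover have "g \<oplus>\<^bsub>dsum M J\<^esub> f = \<zero>\<^bsub>dsum M J\<^esub>"
    by (intro ext) (simp add: g_def ds_add ds_zero ds_carrierD[OF f] abelian_group.l_neg[OF Mag])
  ultimately show "\<ominus>\<^bsub>dsum M J\<^esub> f = g" using f D.minus_equality by metis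
qed

lemma ds_minus: "f \<in> carrier (dsum M J) \<Longrightarrow> g \<in> carrier (dsum M J) \<Longrightarrow>
  f \<ominus>\<^bsub>dsum M J\<^esub> g = (\<lambda>x. if x \<in> J then f x \<ominus>\<^bsub>fst M x\<^esub> g x else undefined)"
  by (intro ext) (simp add: abelian_group.minus_eq[OF module.axioms(2)[OF ds_module]] ds_add ds_inv abelian_group.minus_eq[OF Mag])

end


lemma dir_bound: assumes "directed J" "finite S" "S \<subseteq> J"
  shows "\<exists>z\<in>J. \<forall>x\<in>S. x \<le> z"
  using assms(2,3)
proof (induction S rule: finite_induct)
  case empty then show ?case using assms(1) unfolding directed_def by blast
next
  case (insert x F)
  then obtain z where "z \<in> J" "\<forall>y\<in>F. y \<le> z" by blast
  moreover obtain c where "c \<in> J" "x \<le> c" "z \<le> c" using assms(1) insert.prems \<open>z \<in> J\<close> unfolding directed_def by blast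
  ultimately show ?case using order_trans by blast
qed

context pm begin

lemma ins_val: "dsum_ins M J x a y = (if y = x then a else if y \<in> J then \<zero>\<^bsub>fst M y\<^esub> else undefined)"
  by (simp add: dsum_ins_def)

lemma supp_ins: "x \<in> J \<Longrightarrow> supp J (dsum_ins M J x a) \<subseteq> {x}"
  by (auto simp: supp_def ins_val)

lemma ins_carrier: "x \<in> J \<Longrightarrow> a \<in> carrier (fst M x) \<Longrightarrow> dsum_ins M J x a \<in> carrier (dsum M J)"
  by (rule ds_carrierI) (auto simp: ins_val M_closed intro: finite_subset[OF supp_ins])

lemma ins_add: "x \<in> J \<Longrightarrow> a \<in> carrier (fst M x) \<Longrightarrow> b \<in> carrier (fst M x) \<Longrightarrow>
   dsum_ins M J x (a \<oplus>\<^bsub>fst M x\<^esub> b) = dsum_ins M J x a \<oplus>\<^bsub>dsum M J\<^esub> dsum_ins M J x b"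
  by (intro ext) (simp add: ins_val ds_add abelian_monoid.l_zero[OF Mam] M_closed)

lemma ins_zero: "x \<in> J \<Longrightarrow> dsum_ins M J x \<zero>\<^bsub>fst M x\<^esub> = \<zero>\<^bsub>dsum M J\<^esub>"
  by (intro ext) (simp add: ins_val ds_zero)

lemma ins_smult: "x \<in> J \<Longrightarrow> r \<in> carrier R \<Longrightarrow> a \<in> carrier (fst M x) \<Longrightarrow>
   dsum_ins M J x (r \<odot>\<^bsub>fst M x\<^esub> a) = r \<odot>\<^bsub>dsum M J\<^esub> dsum_ins M J x a"
  by (intro ext) (simp add: ins_val ds_smult module.smult_r_null[OF Mmod])

section \<open>Relations\<close>

definition gens :: "'p set \<Rightarrow> ('p \<Rightarrow> 'm) set" where
  "gens J = {dsum_ins M J x a \<ominus>\<^bsub>dsum M J\<^esub> dsum_ins M J y (snd M x y a) | x y a.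
               x \<in> J \<and> y \<in> J \<and> x \<le> y \<and> a \<in> carrier (fst M x)}"

lemma rel_def2: "dlim_rel R M J = \<Inter> {N. submodule N R (dsum M J) \<and> gens J \<subseteq> N}"
  by (simp add: dlim_rel_def gens_def)

lemma gens_carrier: "gens J \<subseteq> carrier (dsum M J)"
proof -
  interpret D: module R "dsum M J" by (rule ds_module)
  show ?thesis unfolding gens_def by (auto intro!: D.minus_closed ins_carrier Mh_closed)
qed

lemma rel_submodule: "submodule (dlim_rel R M J) R (dsum M J)"
proof -
  interpret D: module R "dsum M J" by (rule ds_module)
  have cF: "carrier (dsum M J) \<in> {N. submodule N R (dsum M J) \<and> gens J \<subseteq> N}"
    using D.carrier_is_submodule gens_carrier by blast
  let ?F = "{N. submodule N R (dsum M J) \<and> gens J \<subseteq> N}"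
  show ?thesis unfolding rel_def2
  proof (rule D.submoduleI)
    show "\<Inter> ?F \<subseteq> carrier (dsum M J)" using cF by blast
    show "\<zero>\<^bsub>dsum M J\<^esub> \<in> \<Inter> ?F" using D.sub_facts(2) by blast
    show "\<And>a. a \<in> \<Inter> ?F \<Longrightarrow> \<ominus>\<^bsub>dsum M J\<^esub> a \<in> \<Inter> ?F" using D.sub_facts(3) by blast
    show "\<And>a b. a \<in> \<Inter> ?F \<Longrightarrow> b \<in> \<Inter> ?F \<Longrightarrow> a \<oplus>\<^bsub>dsum M J\<^esub> b \<in> \<Inter> ?F" using D.sub_facts(4) by blast
    show "\<And>r a. r \<in> carrier R \<Longrightarrow> a \<in> \<Inter> ?F \<Longrightarrow> r \<odot>\<^bsub>dsum M J\<^esub> a \<in> \<Inter> ?F" using D.sub_facts(5) by blast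
  qed
qed

lemma gens_rel: "gens J \<subseteq> dlim_rel R M J"
  unfolding rel_def2 by blast

lemma rel_least: "submodule N R (dsum M J) \<Longrightarrow> gens J \<subseteq> N \<Longrightarrow> dlim_rel R M J \<subseteq> N"
  unfolding rel_def2 by blast

lemma gen_in_rel: "x \<in> J \<Longrightarrow> y \<in> J \<Longrightarrow> x \<le> y \<Longrightarrow> a \<in> carrier (fst M x) \<Longrightarrow>
   dsum_ins M J x a \<ominus>\<^bsub>dsum M J\<^esub> dsum_ins M J y (snd M x y a) \<in> dlim_rel R M J"
  using gens_rel unfolding gens_def by blast

lemma qm: "qmod R (dsum M J) (dlim_rel R M J)"
  by (intro qmod.intro qmod_axioms.intro ds_module rel_submodule)

lemma cls_def2: "dlim_cls R M J = qc (dsum M J) (dlim_rel R M J)"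
  by (intro ext) (simp add: dlim_cls_def qc_def)

lemma dl_def2: "dir_lim R M J = quot (dsum M J) (dlim_rel R M J)"
  by (simp add: dir_lim_def quot_def cls_def2)

lemma dl_module: "module R (dir_lim R M J)"
  unfolding dl_def2 by (rule qmod.q_module[OF qm])

end


context pm begin

definition pi :: "'p set \<Rightarrow> 'p \<Rightarrow> ('p \<Rightarrow> 'm) \<Rightarrow> 'm" where
  "pi J z f = finsum (fst M z) (\<lambda>x. snd M x z (f x)) (supp J f)"

lemma supp_sub: "supp J f \<subseteq> J" by (auto simp: supp_def)

lemma pi_fun: assumes f: "f \<in> carrier (dsum M J)" and S: "S \<subseteq> J" "\<forall>x\<in>S. x \<le> z"
  shows "(\<lambda>x. snd M x z (f x)) \<in> S \<rightarrow> carrier (fst M z)"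
proof (rule Pi_I)
  fix x assume "x \<in> S"
  then have "x \<in> J" "x \<le> z" using S by auto
  then show "snd M x z (f x) \<in> carrier (fst M z)" using Mh_closed ds_carrierD(1)[OF f] by blast
qed

lemma pi_fun2: assumes f: "f \<in> carrier (dsum M J)" and S: "supp J f \<subseteq> {x. x \<le> z}"
  shows "(\<lambda>x. snd M x z (f x)) \<in> supp J f \<rightarrow> carrier (fst M z)"
  by (rule pi_fun[OF f]) (use S supp_sub in auto)

lemma pi_S:
  assumes f: "f \<in> carrier (dsum M J)" and S: "finite S" "supp J f \<subseteq> S" "S \<subseteq> J" "\<forall>x\<in>S. x \<le> z"
  shows "pi J z f = finsum (fst M z) (\<lambda>x. snd M x z (f x)) S"
proof -
  interpret Mz: abelian_monoid "fst M z" by (rule Mam)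
  show ?thesis unfolding pi_def
  proof (rule Mz.add.finprod_mono_neutral_cong_left)
    show "finite S" "supp J f \<subseteq> S" by (fact S)+
    fix i assume "i \<in> S - supp J f"
    then have "f i = \<zero>\<^bsub>fst M i\<^esub>" "i \<le> z" using S by (auto simp: supp_def)
    then show "snd M i z (f i) = \<zero>\<^bsub>fst M z\<^esub>" by (simp add: Mh_zero)
  next
    show "(\<lambda>x. snd M x z (f x)) \<in> S \<rightarrow> carrier (fst M z)"
      by (rule pi_fun[OF f]) (use S in auto)
  qed simp
qed

lemma pi_closed: "f \<in> carrier (dsum M J) \<Longrightarrow> supp J f \<subseteq> {x. x \<le> z} \<Longrightarrow> pi J z f \<in> carrier (fst M z)"
proof -
  assume f: "f \<in> carrier (dsum M J)" and s: "supp J f \<subseteq> {x. x \<le> z}"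
  interpret Mz: abelian_monoid "fst M z" by (rule Mam)
  show ?thesis unfolding pi_def
    by (rule Mz.finsum_closed) (rule pi_fun2[OF f s])
qed

lemma supp_add: "f \<in> carrier (dsum M J) \<Longrightarrow> g \<in> carrier (dsum M J) \<Longrightarrow>
   supp J (f \<oplus>\<^bsub>dsum M J\<^esub> g) \<subseteq> supp J f \<union> supp J g"
  by (auto simp: supp_def ds_add abelian_monoid.l_zero[OF Mam] M_closed)

lemma supp_smult: "r \<in> carrier R \<Longrightarrow> supp J (r \<odot>\<^bsub>dsum M J\<^esub> f) \<subseteq> supp J f"
  by (auto simp: supp_def ds_smult module.smult_r_null[OF Mmod])

lemma supp_inv: "f \<in> carrier (dsum M J) \<Longrightarrow> supp J (\<ominus>\<^bsub>dsum M J\<^esub> f) \<subseteq> supp J f"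
  by (auto simp: supp_def ds_inv M_inv_zero)

lemma pi_add:
  assumes f: "f \<in> carrier (dsum M J)" and g: "g \<in> carrier (dsum M J)"
    and sf: "supp J f \<subseteq> {x. x \<le> z}" and sg: "supp J g \<subseteq> {x. x \<le> z}"
  shows "pi J z (f \<oplus>\<^bsub>dsum M J\<^esub> g) = pi J z f \<oplus>\<^bsub>fst M z\<^esub> pi J z g"
proof -
  interpret Mz: abelian_monoid "fst M z" by (rule Mam)
  interpret D: module R "dsum M J" by (rule ds_module)
  let ?S = "supp J f \<union> supp J g"
  have fin: "finite ?S" using ds_carrierD(3) f g by blast
  have sub: "?S \<subseteq> J" "\<forall>x\<in>?S. x \<le> z" using sf sg supp_sub by blast+
  have "pi J z (f \<oplus>\<^bsub>dsum M J\<^esub> g) = finsum (fst M z) (\<lambda>x. snd M x z ((f \<oplus>\<^bsub>dsum M J\<^esub> g) x)) ?S"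
    by (rule pi_S) (use f g fin sub supp_add[OF f g] in auto)
  also have "\<dots> = finsum (fst M z) (\<lambda>x. snd M x z (f x) \<oplus>\<^bsub>fst M z\<^esub> snd M x z (g x)) ?S"
    by (rule Mz.finsum_cong') (use sub f g in \<open>auto simp: ds_add Mh_add ds_carrierD M_closed\<close>)
  also have "\<dots> = finsum (fst M z) (\<lambda>x. snd M x z (f x)) ?S \<oplus>\<^bsub>fst M z\<^esub> finsum (fst M z) (\<lambda>x. snd M x z (g x)) ?S"
    by (rule Mz.finsum_addf) (use sub f g in \<open>auto simp: ds_carrierD M_closed\<close>)
  also have "\<dots> = pi J z f \<oplus>\<^bsub>fst M z\<^esub> pi J z g"
    using pi_S[OF f fin _ sub] pi_S[OF g fin _ sub] by simp
  finally show ?thesis .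
qed

lemma pi_smult:
  assumes r: "r \<in> carrier R" and f: "f \<in> carrier (dsum M J)" and sf: "supp J f \<subseteq> {x. x \<le> z}"
  shows "pi J z (r \<odot>\<^bsub>dsum M J\<^esub> f) = r \<odot>\<^bsub>fst M z\<^esub> pi J z f"
proof -
  interpret Mz: module R "fst M z" by (rule Mmod)
  interpret D: module R "dsum M J" by (rule ds_module)
  let ?S = "supp J f"
  have fin: "finite ?S" using ds_carrierD(3) f by blast
  have sub: "?S \<subseteq> J" "\<forall>x\<in>?S. x \<le> z" using sf supp_sub by blast+
  have "pi J z (r \<odot>\<^bsub>dsum M J\<^esub> f) = finsum (fst M z) (\<lambda>x. snd M x z ((r \<odot>\<^bsub>dsum M J\<^esub> f) x)) ?S"
    by (rule pi_S) (use f r fin sub supp_smult[OF r] in auto)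
  also have "\<dots> = finsum (fst M z) (\<lambda>x. r \<odot>\<^bsub>fst M z\<^esub> snd M x z (f x)) ?S"
    by (rule Mz.finsum_cong') (use sub f r in \<open>auto simp: ds_smult Mh_smult ds_carrierD M_closed\<close>)
  also have "\<dots> = r \<odot>\<^bsub>fst M z\<^esub> pi J z f"
    unfolding pi_def by (rule Mz.finsum_smult_ldistr[symmetric]) (use sub f r fin in \<open>auto simp: ds_carrierD M_closed\<close>)
  finally show ?thesis .
qed

lemma pi_inv:
  assumes f: "f \<in> carrier (dsum M J)" and sf: "supp J f \<subseteq> {x. x \<le> z}"
  shows "pi J z (\<ominus>\<^bsub>dsum M J\<^esub> f) = \<ominus>\<^bsub>fst M z\<^esub> pi J z f"
proof -
  interpret Mz: module R "fst M z" by (rule Mmod)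
  interpret D: module R "dsum M J" by (rule ds_module)
  have "\<ominus>\<^bsub>dsum M J\<^esub> f = (\<ominus>\<^bsub>R\<^esub> \<one>\<^bsub>R\<^esub>) \<odot>\<^bsub>dsum M J\<^esub> f" using f D.smult_l_minus[of "\<one>\<^bsub>R\<^esub>" f] by simp
  moreover have "\<ominus>\<^bsub>fst M z\<^esub> pi J z f = (\<ominus>\<^bsub>R\<^esub> \<one>\<^bsub>R\<^esub>) \<odot>\<^bsub>fst M z\<^esub> pi J z f"
    using pi_closed[OF f sf] Mz.smult_l_minus[of "\<one>\<^bsub>R\<^esub>"] by simp
  ultimately show ?thesis using pi_smult[OF _ f sf, of "\<ominus>\<^bsub>R\<^esub> \<one>\<^bsub>R\<^esub>"] by simp
qed

lemma pi_minus:
  assumes f: "f \<in> carrier (dsum M J)" and g: "g \<in> carrier (dsum M J)"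
    and sf: "supp J f \<subseteq> {x. x \<le> z}" and sg: "supp J g \<subseteq> {x. x \<le> z}"
  shows "pi J z (f \<ominus>\<^bsub>dsum M J\<^esub> g) = pi J z f \<ominus>\<^bsub>fst M z\<^esub> pi J z g"
proof -
  interpret Mz: module R "fst M z" by (rule Mmod)
  interpret D: module R "dsum M J" by (rule ds_module)
  have "pi J z (f \<ominus>\<^bsub>dsum M J\<^esub> g) = pi J z (f \<oplus>\<^bsub>dsum M J\<^esub> \<ominus>\<^bsub>dsum M J\<^esub> g)" by (simp add: D.minus_eq)
  also have "\<dots> = pi J z f \<oplus>\<^bsub>fst M z\<^esub> pi J z (\<ominus>\<^bsub>dsum M J\<^esub> g)"
    by (rule pi_add) (use f g sf sg supp_inv[OF g] in auto)
  also have "\<dots> = pi J z f \<ominus>\<^bsub>fst M z\<^esub> pi J z g" by (simp add: pi_inv[OF g sg] Mz.minus_eq)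
  finally show ?thesis .
qed

lemma pi_trans:
  assumes f: "f \<in> carrier (dsum M J)" and sf: "supp J f \<subseteq> {x. x \<le> z}" and zz: "z \<le> z'"
  shows "snd M z z' (pi J z f) = pi J z' f"
proof -
  have fin: "finite (supp J f)" using ds_carrierD(3) f by blast
  have "snd M z z' (pi J z f) = finsum (fst M z') (\<lambda>x. snd M z z' (snd M x z (f x))) (supp J f)"
    unfolding pi_def by (rule mh_finsum[OF Mmod Mmod Mh[OF zz] fin pi_fun2[OF f sf]])
  also have "\<dots> = pi J z' f" unfolding pi_def
  proof (rule abelian_monoid.finsum_cong'[OF Mam refl])
    show "(\<lambda>x. snd M x z' (f x)) \<in> supp J f \<rightarrow> carrier (fst M z')"
      by (rule pi_fun2[OF f]) (use sf zz in auto)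
    fix i assume i: "i \<in> supp J f"
    then have "i \<in> J" "i \<le> z" using sf supp_sub by auto
    then show "snd M z z' (snd M i z (f i)) = snd M i z' (f i)" using Mcomp zz ds_carrierD(1)[OF f] by blast
  qed
  finally show ?thesis .
qed

lemma pi_ins:
  assumes x: "x \<in> J" "x \<le> z" and a: "a \<in> carrier (fst M x)"
  shows "pi J z (dsum_ins M J x a) = snd M x z a"
proof -
  interpret Mz: abelian_monoid "fst M z" by (rule Mam)
  have "pi J z (dsum_ins M J x a) = finsum (fst M z) (\<lambda>y. snd M y z (dsum_ins M J x a y)) {x}"
    by (rule pi_S) (use x a supp_ins[OF x(1)] in \<open>auto intro: ins_carrier\<close>)
  also have "\<dots> = snd M x z a" using x a by (simp add: ins_val Mh_closed)
  finally show ?thesis .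
qed

lemma supp_zero: "supp J \<zero>\<^bsub>dsum M J\<^esub> = {}"
  by (simp add: supp_def ds_zero)

lemma pi_zero: "pi J z \<zero>\<^bsub>dsum M J\<^esub> = \<zero>\<^bsub>fst M z\<^esub>"
  by (simp add: pi_def supp_zero abelian_monoid.finsum_empty[OF Mam])

end


context pm begin

lemma supp_empty: "f \<in> carrier (dsum M J) \<Longrightarrow> supp J f = {} \<Longrightarrow> f = \<zero>\<^bsub>dsum M J\<^esub>"
  by (intro ext) (auto simp: supp_def ds_zero ds_carrierD)

lemma collapse_S:
  assumes z: "z \<in> J" and S: "finite S" "S \<subseteq> J" "\<forall>x\<in>S. x \<le> z"
  shows "\<forall>f. f \<in> carrier (dsum M J) \<longrightarrow> supp J f \<subseteq> S \<longrightarrow>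
     f \<ominus>\<^bsub>dsum M J\<^esub> dsum_ins M J z (finsum (fst M z) (\<lambda>x. snd M x z (f x)) S) \<in> dlim_rel R M J"
  using S
proof (induction S rule: finite_induct)
  case empty
  interpret D: module R "dsum M J" by (rule ds_module)
  interpret Mz: abelian_monoid "fst M z" by (rule Mam)
  show ?case
  proof (intro allI impI)
    fix f assume f: "f \<in> carrier (dsum M J)" "supp J f \<subseteq> {}"
    then have "f = \<zero>\<^bsub>dsum M J\<^esub>" using supp_empty by blast
    then show "f \<ominus>\<^bsub>dsum M J\<^esub> dsum_ins M J z (finsum (fst M z) (\<lambda>x. snd M x z (f x)) {}) \<in> dlim_rel R M J"
      using z D.sub_facts(2)[OF rel_submodule] by (simp add: ins_zero D.ag_diff_self)
  qed
next
  case (insert x F)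
  interpret D: module R "dsum M J" by (rule ds_module)
  interpret Mz: abelian_monoid "fst M z" by (rule Mam)
  have xJ: "x \<in> J" "x \<le> z" and FJ: "F \<subseteq> J" "\<forall>y\<in>F. y \<le> z" using insert.prems by auto
  show ?case
  proof (intro allI impI)
    fix f assume f: "f \<in> carrier (dsum M J)" and sf: "supp J f \<subseteq> insert x F"
    define f' where "f' = f(x := \<zero>\<^bsub>fst M x\<^esub>)"
    have a: "f x \<in> carrier (fst M x)" using ds_carrierD(1)[OF f xJ(1)] .
    have f': "f' \<in> carrier (dsum M J)"
    proof (rule ds_carrierI)
      have "supp J f' \<subseteq> supp J f" by (auto simp: supp_def f'_def)
      then show "finite (supp J f')" using ds_carrierD(3)[OF f] finite_subset by blast
    qed (use xJ f in \<open>auto simp: f'_def ds_carrierD M_closed\<close>)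
    have sf': "supp J f' \<subseteq> F" using sf by (auto simp: supp_def f'_def)
    have feq: "f = f' \<oplus>\<^bsub>dsum M J\<^esub> dsum_ins M J x (f x)"
      by (intro ext) (use f xJ a in \<open>auto simp: ds_add ins_val f'_def ds_carrierD abelian_monoid.r_zero[OF Mam] abelian_monoid.l_zero[OF Mam]\<close>)
    have Fpi: "(\<lambda>y. snd M y z (f' y)) \<in> F \<rightarrow> carrier (fst M z)" using pi_fun[OF f' FJ] .
    have b: "snd M x z (f x) \<in> carrier (fst M z)" using Mh_closed xJ a by blast
    have "finsum (fst M z) (\<lambda>y. snd M y z (f y)) (insert x F) =
          snd M x z (f x) \<oplus>\<^bsub>fst M z\<^esub> finsum (fst M z) (\<lambda>y. snd M y z (f y)) F"
      by (rule Mz.finsum_insert) (use insert.hyps pi_fun[OF f FJ] b in auto)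
    also have "finsum (fst M z) (\<lambda>y. snd M y z (f y)) F = finsum (fst M z) (\<lambda>y. snd M y z (f' y)) F"
      by (rule Mz.finsum_cong'[OF refl Fpi]) (use insert.hyps in \<open>auto simp: f'_def\<close>)
    finally have sum: "finsum (fst M z) (\<lambda>y. snd M y z (f y)) (insert x F) =
          snd M x z (f x) \<oplus>\<^bsub>fst M z\<^esub> finsum (fst M z) (\<lambda>y. snd M y z (f' y)) F" .
    define s where "s = finsum (fst M z) (\<lambda>y. snd M y z (f' y)) F"
    have sc: "s \<in> carrier (fst M z)" unfolding s_def by (rule Mz.finsum_closed[OF Fpi])
    have i1: "dsum_ins M J x (f x) \<in> carrier (dsum M J)" using ins_carrier xJ a by blast
    have i2: "dsum_ins M J z s \<in> carrier (dsum M J)" using ins_carrier z sc by blast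
    have i3: "dsum_ins M J z (snd M x z (f x)) \<in> carrier (dsum M J)" using ins_carrier z b by blast
    have "f \<ominus>\<^bsub>dsum M J\<^esub> dsum_ins M J z (finsum (fst M z) (\<lambda>y. snd M y z (f y)) (insert x F))
       = (f' \<oplus>\<^bsub>dsum M J\<^esub> dsum_ins M J x (f x)) \<ominus>\<^bsub>dsum M J\<^esub> (dsum_ins M J z s \<oplus>\<^bsub>dsum M J\<^esub> dsum_ins M J z (snd M x z (f x)))"
      using sum feq ins_add[OF z b sc] D.a_comm[OF i3 i2] by (simp add: s_def)
    also have "\<dots> = (f' \<ominus>\<^bsub>dsum M J\<^esub> dsum_ins M J z s) \<oplus>\<^bsub>dsum M J\<^esub> (dsum_ins M J x (f x) \<ominus>\<^bsub>dsum M J\<^esub> dsum_ins M J z (snd M x z (f x)))"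
      by (rule D.ag_diff_add[OF f' i1 i2 i3])
    also have "\<dots> \<in> dlim_rel R M J"
    proof (rule D.sub_facts(4)[OF rel_submodule])
      show "f' \<ominus>\<^bsub>dsum M J\<^esub> dsum_ins M J z s \<in> dlim_rel R M J"
        using insert.IH FJ f' sf' by (simp add: s_def)
      show "dsum_ins M J x (f x) \<ominus>\<^bsub>dsum M J\<^esub> dsum_ins M J z (snd M x z (f x)) \<in> dlim_rel R M J"
        by (rule gen_in_rel[OF xJ(1) z xJ(2) a])
    qed
    finally show "f \<ominus>\<^bsub>dsum M J\<^esub> dsum_ins M J z (finsum (fst M z) (\<lambda>y. snd M y z (f y)) (insert x F)) \<in> dlim_rel R M J" .
  qed
qed

lemma collapse:
  assumes f: "f \<in> carrier (dsum M J)" and z: "z \<in> J" and sf: "supp J f \<subseteq> {x. x \<le> z}"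
  shows "f \<ominus>\<^bsub>dsum M J\<^esub> dsum_ins M J z (pi J z f) \<in> dlim_rel R M J"
  using collapse_S[OF z ds_carrierD(3)[OF f] supp_sub] sf f unfolding pi_def by blast

lemma collapse_cls:
  assumes f: "f \<in> carrier (dsum M J)" and z: "z \<in> J" and sf: "supp J f \<subseteq> {x. x \<le> z}"
  shows "dlim_cls R M J f = dlim_cls R M J (dsum_ins M J z (pi J z f))"
  unfolding cls_def2 using qmod.qc_eq[OF qm f ins_carrier[OF z pi_closed[OF f sf]]] collapse[OF assms] by simp

lemma move_cls:
  assumes "x \<in> J" "y \<in> J" "x \<le> y" "a \<in> carrier (fst M x)"
  shows "dlim_cls R M J (dsum_ins M J x a) = dlim_cls R M J (dsum_ins M J y (snd M x y a))"
  unfolding cls_def2 using qmod.qc_eq[OF qm ins_carrier ins_carrier] gen_in_rel assms Mh_closed by simp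

lemma relE_rel:
  assumes f: "f \<in> carrier (dsum M J)" and z: "z \<in> J" and sf: "supp J f \<subseteq> {x. x \<le> z}" and p: "pi J z f = \<zero>\<^bsub>fst M z\<^esub>"
  shows "f \<in> dlim_rel R M J"
proof -
  interpret D: module R "dsum M J" by (rule ds_module)
  show ?thesis using collapse[OF f z sf] by (simp add: p ins_zero z D.ag_diff_zero f)
qed

definition relE :: "'p set \<Rightarrow> ('p \<Rightarrow> 'm) set" where
  "relE J = {f \<in> carrier (dsum M J). \<exists>z\<in>J. supp J f \<subseteq> {x. x \<le> z} \<and> pi J z f = \<zero>\<^bsub>fst M z\<^esub>}"

lemma rel_relE: assumes dJ: "directed J" shows "dlim_rel R M J \<subseteq> relE J"
proof (rule rel_least)
  interpret D: module R "dsum M J" by (rule ds_module)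
  show "submodule (relE J) R (dsum M J)"
  proof (rule D.submoduleI)
    show "relE J \<subseteq> carrier (dsum M J)" unfolding relE_def by blast
  next
    obtain z where "z \<in> J" using dJ unfolding directed_def by blast
    then show "\<zero>\<^bsub>dsum M J\<^esub> \<in> relE J" unfolding relE_def by (auto simp: supp_zero pi_zero)
  next
    fix f assume "f \<in> relE J"
    then obtain z where f: "f \<in> carrier (dsum M J)" and z: "z \<in> J" "supp J f \<subseteq> {x. x \<le> z}" "pi J z f = \<zero>\<^bsub>fst M z\<^esub>"
      unfolding relE_def by blast
    show "\<ominus>\<^bsub>dsum M J\<^esub> f \<in> relE J" unfolding relE_def
      using f z supp_inv[OF f] pi_inv[OF f z(2)] by (auto simp: M_inv_zero)
  next
    fix f g assume "f \<in> relE J" "g \<in> relE J"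
    then obtain z1 z2 where f: "f \<in> carrier (dsum M J)" and z1: "z1 \<in> J" "supp J f \<subseteq> {x. x \<le> z1}" "pi J z1 f = \<zero>\<^bsub>fst M z1\<^esub>"
      and g: "g \<in> carrier (dsum M J)" and z2: "z2 \<in> J" "supp J g \<subseteq> {x. x \<le> z2}" "pi J z2 g = \<zero>\<^bsub>fst M z2\<^esub>"
      unfolding relE_def by blast
    obtain z where z: "z \<in> J" "z1 \<le> z" "z2 \<le> z" using dJ z1(1) z2(1) unfolding directed_def by blast
    have sf: "supp J f \<subseteq> {x. x \<le> z}" using z1 z order_trans by blast
    have sg: "supp J g \<subseteq> {x. x \<le> z}" using z2 z order_trans by blast
    have pf: "pi J z f = \<zero>\<^bsub>fst M z\<^esub>" using pi_trans[OF f z1(2) z(2)] z1(3) Mh_zero[OF z(2)] by simp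
    have pg: "pi J z g = \<zero>\<^bsub>fst M z\<^esub>" using pi_trans[OF g z2(2) z(3)] z2(3) Mh_zero[OF z(3)] by simp
    show "f \<oplus>\<^bsub>dsum M J\<^esub> g \<in> relE J" unfolding relE_def
      using f g z sf sg pi_add[OF f g sf sg] pf pg supp_add[OF f g]
      by (auto simp: abelian_monoid.l_zero[OF Mam] M_closed)
  next
    fix r f assume r: "r \<in> carrier R" and "f \<in> relE J"
    then obtain z where f: "f \<in> carrier (dsum M J)" and z: "z \<in> J" "supp J f \<subseteq> {x. x \<le> z}" "pi J z f = \<zero>\<^bsub>fst M z\<^esub>"
      unfolding relE_def by blast
    show "r \<odot>\<^bsub>dsum M J\<^esub> f \<in> relE J" unfolding relE_def
      using f z r supp_smult[OF r, of J f] pi_smult[OF r f z(2)] by (auto simp: module.smult_r_null[OF Mmod])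
  qed
next
  interpret D: module R "dsum M J" by (rule ds_module)
  show "gens J \<subseteq> relE J"
  proof
    fix g assume "g \<in> gens J"
    then obtain x y a where g: "g = dsum_ins M J x a \<ominus>\<^bsub>dsum M J\<^esub> dsum_ins M J y (snd M x y a)"
      and xy: "x \<in> J" "y \<in> J" "x \<le> y" and a: "a \<in> carrier (fst M x)" unfolding gens_def by blast
    have b: "snd M x y a \<in> carrier (fst M y)" using Mh_closed xy a by blast
    have i1: "dsum_ins M J x a \<in> carrier (dsum M J)" using ins_carrier xy a by blast
    have i2: "dsum_ins M J y (snd M x y a) \<in> carrier (dsum M J)" using ins_carrier xy b by blast
    have s1: "supp J (dsum_ins M J x a) \<subseteq> {x. x \<le> y}" using supp_ins[OF xy(1)] xy by auto
    have s2: "supp J (dsum_ins M J y (snd M x y a)) \<subseteq> {x. x \<le> y}" using supp_ins[OF xy(2)] by auto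
    have gc: "g \<in> carrier (dsum M J)" using g i1 i2 by simp
    have "supp J g \<subseteq> supp J (dsum_ins M J x a) \<union> supp J (\<ominus>\<^bsub>dsum M J\<^esub> dsum_ins M J y (snd M x y a))"
      unfolding g D.minus_eq using supp_add i1 i2 by simp
    then have sg: "supp J g \<subseteq> {x. x \<le> y}" using s1 s2 supp_inv[OF i2] by blast
    have "pi J y g = snd M x y a \<ominus>\<^bsub>fst M y\<^esub> snd M y y (snd M x y a)"
      unfolding g pi_minus[OF i1 i2 s1 s2] pi_ins[OF xy(1,3) a] pi_ins[OF xy(2) order_refl b] ..
    also have "\<dots> = \<zero>\<^bsub>fst M y\<^esub>" using b by (simp add: Mid abelian_group.ag_diff_self[OF Mag])
    finally show "g \<in> relE J" unfolding relE_def using gc xy sg by blast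
  qed
qed

lemma rel_char: assumes dJ: "directed J"
  shows "f \<in> dlim_rel R M J \<longleftrightarrow> f \<in> carrier (dsum M J) \<and> (\<exists>z\<in>J. supp J f \<subseteq> {x. x \<le> z} \<and> pi J z f = \<zero>\<^bsub>fst M z\<^esub>)"
  using rel_relE[OF dJ] relE_rel unfolding relE_def by blast

end


lemma sub_preimage:
  assumes N1: "module R N1" and N2: "module R N2" and h: "mod_hom R N1 N2 h" and S2: "submodule S2 R N2"
  shows "submodule {f \<in> carrier N1. h f \<in> S2} R N1"
proof -
  interpret N1: module R N1 by (rule N1)
  interpret N2: module R N2 by (rule N2)
  show ?thesis
  proof (rule N1.submoduleI)
    show "{f \<in> carrier N1. h f \<in> S2} \<subseteq> carrier N1" by blast
    show "\<zero>\<^bsub>N1\<^esub> \<in> {f \<in> carrier N1. h f \<in> S2}" using mh_zero[OF N1 N2 h] N2.sub_facts(2)[OF S2] by simp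
    show "\<And>a. a \<in> {f \<in> carrier N1. h f \<in> S2} \<Longrightarrow> \<ominus>\<^bsub>N1\<^esub> a \<in> {f \<in> carrier N1. h f \<in> S2}"
      using mh_inv[OF N1 N2 h] N2.sub_facts(3)[OF S2] by simp
    show "\<And>a b. a \<in> {f \<in> carrier N1. h f \<in> S2} \<Longrightarrow> b \<in> {f \<in> carrier N1. h f \<in> S2} \<Longrightarrow> a \<oplus>\<^bsub>N1\<^esub> b \<in> {f \<in> carrier N1. h f \<in> S2}"
      using mh_add[OF h] N2.sub_facts(4)[OF S2] by simp
    show "\<And>r a. r \<in> carrier R \<Longrightarrow> a \<in> {f \<in> carrier N1. h f \<in> S2} \<Longrightarrow> r \<odot>\<^bsub>N1\<^esub> a \<in> {f \<in> carrier N1. h f \<in> S2}"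
      using mh_smult[OF h] N2.sub_facts(5)[OF S2] by simp
  qed
qed

lemma qind:
  assumes Q1: "qmod R N1 S1" and Q2: "qmod R N2 S2" and h: "mod_hom R N1 N2 h" and hS: "\<And>f. f \<in> S1 \<Longrightarrow> h f \<in> S2"
  shows "mod_hom R (quot N1 S1) (quot N2 S2) (\<lambda>A. qc N2 S2 (h (rep A)))"
    and "f \<in> carrier N1 \<Longrightarrow> qc N2 S2 (h (rep (qc N1 S1 f))) = qc N2 S2 (h f)"
proof -
  interpret Q1: qmod R N1 S1 by (rule Q1)
  interpret Q2: qmod R N2 S2 by (rule Q2)
  have N1: "module R N1" and N2: "module R N2" by unfold_locales
  have key: "\<And>f. f \<in> carrier N1 \<Longrightarrow> qc N2 S2 (h (rep (qc N1 S1 f))) = qc N2 S2 (h f)"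
  proof -
    fix f assume f: "f \<in> carrier N1"
    have "h (rep (qc N1 S1 f)) \<ominus>\<^bsub>N2\<^esub> h f = h (rep (qc N1 S1 f) \<ominus>\<^bsub>N1\<^esub> f)"
      using mh_minus[OF N1 N2 h Q1.rep_qc(1)[OF f] f] by simp
    also have "\<dots> \<in> S2" using hS Q1.rep_qc(2)[OF f] by blast
    finally show "qc N2 S2 (h (rep (qc N1 S1 f))) = qc N2 S2 (h f)"
      using Q2.qc_eq mh_closed[OF h] Q1.rep_qc(1)[OF f] f by blast
  qed
  then show "f \<in> carrier N1 \<Longrightarrow> qc N2 S2 (h (rep (qc N1 S1 f))) = qc N2 S2 (h f)" .
  show "mod_hom R (quot N1 S1) (quot N2 S2) (\<lambda>A. qc N2 S2 (h (rep A)))"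
    unfolding mod_hom_def
  proof (intro conjI ballI)
    fix A assume "A \<in> carrier (quot N1 S1)"
    then show "qc N2 S2 (h (rep A)) \<in> carrier (quot N2 S2)"
      using Q1.rep_in(1) mh_closed[OF h] Q2.q_in by blast
  next
    fix A B assume "A \<in> carrier (quot N1 S1)" "B \<in> carrier (quot N1 S1)"
    then obtain f g where f: "f \<in> carrier N1" "A = qc N1 S1 f" and g: "g \<in> carrier N1" "B = qc N1 S1 g"
      by (auto elim!: Q1.q_cases)
    show "qc N2 S2 (h (rep (A \<oplus>\<^bsub>quot N1 S1\<^esub> B))) = qc N2 S2 (h (rep A)) \<oplus>\<^bsub>quot N2 S2\<^esub> qc N2 S2 (h (rep B))"
      using f g by (simp add: Q1.q_add key Q2.q_add mh_add[OF h] mh_closed[OF h])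
  next
    fix r A assume r: "r \<in> carrier R" and "A \<in> carrier (quot N1 S1)"
    then obtain f where f: "f \<in> carrier N1" "A = qc N1 S1 f" by (auto elim!: Q1.q_cases)
    show "qc N2 S2 (h (rep (r \<odot>\<^bsub>quot N1 S1\<^esub> A))) = r \<odot>\<^bsub>quot N2 S2\<^esub> qc N2 S2 (h (rep A))"
      using f r by (simp add: Q1.q_smult key Q2.q_smult mh_smult[OF h] mh_closed[OF h])
  qed
qed

lemma qout:
  assumes Q1: "qmod R N1 S1" and T: "module R T" and h: "mod_hom R N1 T h" and hS: "\<And>f. f \<in> S1 \<Longrightarrow> h f = \<zero>\<^bsub>T\<^esub>"
  shows "mod_hom R (quot N1 S1) T (\<lambda>A. h (rep A))"
    and "f \<in> carrier N1 \<Longrightarrow> h (rep (qc N1 S1 f)) = h f"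
proof -
  interpret Q1: qmod R N1 S1 by (rule Q1)
  interpret T: module R T by (rule T)
  have N1: "module R N1" by unfold_locales
  have key: "\<And>f. f \<in> carrier N1 \<Longrightarrow> h (rep (qc N1 S1 f)) = h f"
  proof -
    fix f assume f: "f \<in> carrier N1"
    have "h (rep (qc N1 S1 f)) \<ominus>\<^bsub>T\<^esub> h f = h (rep (qc N1 S1 f) \<ominus>\<^bsub>N1\<^esub> f)"
      using mh_minus[OF N1 T h Q1.rep_qc(1)[OF f] f] by simp
    also have "\<dots> = \<zero>\<^bsub>T\<^esub>" using hS Q1.rep_qc(2)[OF f] by blast
    finally show "h (rep (qc N1 S1 f)) = h f"
      using T.ag_diff_eq0 mh_closed[OF h] Q1.rep_qc(1)[OF f] f by blast
  qed
  then show "f \<in> carrier N1 \<Longrightarrow> h (rep (qc N1 S1 f)) = h f" .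
  show "mod_hom R (quot N1 S1) T (\<lambda>A. h (rep A))"
    unfolding mod_hom_def
  proof (intro conjI ballI)
    fix A assume "A \<in> carrier (quot N1 S1)"
    then show "h (rep A) \<in> carrier T"
      using Q1.rep_in(1) mh_closed[OF h] by blast
  next
    fix A B assume "A \<in> carrier (quot N1 S1)" "B \<in> carrier (quot N1 S1)"
    then obtain f g where f: "f \<in> carrier N1" "A = qc N1 S1 f" and g: "g \<in> carrier N1" "B = qc N1 S1 g"
      by (auto elim!: Q1.q_cases)
    show "h (rep (A \<oplus>\<^bsub>quot N1 S1\<^esub> B)) = h (rep A) \<oplus>\<^bsub>T\<^esub> h (rep B)"
      using f g by (simp add: Q1.q_add key mh_add[OF h])
  next
    fix r A assume r: "r \<in> carrier R" and "A \<in> carrier (quot N1 S1)"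
    then obtain f where f: "f \<in> carrier N1" "A = qc N1 S1 f" by (auto elim!: Q1.q_cases)
    show "h (rep (r \<odot>\<^bsub>quot N1 S1\<^esub> A)) = r \<odot>\<^bsub>T\<^esub> h (rep A)"
      using f r by (simp add: Q1.q_smult key mh_smult[OF h])
  qed
qed

lemma mh_inj:
  assumes A: "module R A" and B: "module R B" and h: "mod_hom R A B h"
    and ker: "\<And>a. a \<in> carrier A \<Longrightarrow> h a = \<zero>\<^bsub>B\<^esub> \<Longrightarrow> a = \<zero>\<^bsub>A\<^esub>"
  shows "inj_on h (carrier A)"
proof (rule inj_onI)
  interpret A: module R A by (rule A)
  interpret B: module R B by (rule B)
  fix a b assume a: "a \<in> carrier A" and b: "b \<in> carrier A" and e: "h a = h b"
  have "h (a \<ominus>\<^bsub>A\<^esub> b) = \<zero>\<^bsub>B\<^esub>" using mh_minus[OF A B h a b] e B.ag_diff_self mh_closed[OF h b] by simp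
  then have "a \<ominus>\<^bsub>A\<^esub> b = \<zero>\<^bsub>A\<^esub>" using ker a b by simp
  then show "a = b" using A.ag_diff_eq0 a b by blast
qed

lemma iso_cong:
  assumes pA: "pm R A" and iso: "is_pm_iso R A B eta" and eq: "\<And>p a. a \<in> carrier (fst A p) \<Longrightarrow> eta' p a = eta p a"
  shows "is_pm_iso R A B eta'"
  unfolding is_pm_iso_def
proof (intro conjI allI impI ballI)
  fix p
  have h: "mod_hom R (fst A p) (fst B p) (eta p)" and b: "bij_betw (eta p) (carrier (fst A p)) (carrier (fst B p))"
    using iso unfolding is_pm_iso_def by blast+
  show "bij_betw (eta' p) (carrier (fst A p)) (carrier (fst B p))"
    by (rule bij_betw_cong[THEN iffD2, OF _ b]) (simp add: eq)
  show "mod_hom R (fst A p) (fst B p) (eta' p)"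
    unfolding mod_hom_def
  proof (intro conjI ballI)
    fix a assume a: "a \<in> carrier (fst A p)"
    show "eta' p a \<in> carrier (fst B p)" using mh_closed[OF h a] eq[OF a] by simp
  next
    fix a b assume a: "a \<in> carrier (fst A p)" and b: "b \<in> carrier (fst A p)"
    have ab: "a \<oplus>\<^bsub>fst A p\<^esub> b \<in> carrier (fst A p)" by (rule pm.M_add_closed[OF pA a b])
    show "eta' p (a \<oplus>\<^bsub>fst A p\<^esub> b) = eta' p a \<oplus>\<^bsub>fst B p\<^esub> eta' p b"
      unfolding eq[OF ab] eq[OF a] eq[OF b] by (rule mh_add[OF h a b])
  next
    fix r a assume r: "r \<in> carrier R" and a: "a \<in> carrier (fst A p)"
    have ra: "r \<odot>\<^bsub>fst A p\<^esub> a \<in> carrier (fst A p)" by (rule pm.M_smult_closed[OF pA r a])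
    show "eta' p (r \<odot>\<^bsub>fst A p\<^esub> a) = r \<odot>\<^bsub>fst B p\<^esub> eta' p a"
      unfolding eq[OF ra] eq[OF a] by (rule mh_smult[OF h r a])
  qed
next
  fix p q a assume pq: "p \<le> q" and a: "a \<in> carrier (fst A p)"
  have "eta q (snd A p q a) = snd B p q (eta p a)" using iso pq a unfolding is_pm_iso_def by blast
  then show "eta' q (snd A p q a) = snd B p q (eta' p a)"
    unfolding eq[OF a] eq[OF pm.Mh_closed[OF pA pq a]] .
qed

lemma iso_inv:
  assumes pA: "pm R A" and iso: "is_pm_iso R A B eta"
  shows "is_pm_iso R B A (\<lambda>p. inv_into (carrier (fst A p)) (eta p))"
  unfolding is_pm_iso_def
proof (intro conjI allI impI ballI)
  fix p
  have h: "mod_hom R (fst A p) (fst B p) (eta p)" and b: "bij_betw (eta p) (carrier (fst A p)) (carrier (fst B p))"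
    using iso unfolding is_pm_iso_def by blast+
  have inj: "inj_on (eta p) (carrier (fst A p))" using b unfolding bij_betw_def by blast
  have img: "eta p ` carrier (fst A p) = carrier (fst B p)" using b unfolding bij_betw_def by blast
  let ?i = "inv_into (carrier (fst A p)) (eta p)"
  show "bij_betw ?i (carrier (fst B p)) (carrier (fst A p))" by (rule bij_betw_inv_into[OF b])
  have ic: "\<And>y. y \<in> carrier (fst B p) \<Longrightarrow> ?i y \<in> carrier (fst A p)"
    by (rule inv_into_into) (simp add: img)
  have fi: "\<And>y. y \<in> carrier (fst B p) \<Longrightarrow> eta p (?i y) = y"
    by (rule f_inv_into_f) (simp add: img)
  have if_: "\<And>x. x \<in> carrier (fst A p) \<Longrightarrow> ?i (eta p x) = x" by (rule inv_into_f_f[OF inj])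
  show "mod_hom R (fst B p) (fst A p) ?i"
    unfolding mod_hom_def
  proof (intro conjI ballI)
    fix y assume "y \<in> carrier (fst B p)" then show "?i y \<in> carrier (fst A p)" by (rule ic)
  next
    fix y1 y2 assume y1: "y1 \<in> carrier (fst B p)" and y2: "y2 \<in> carrier (fst B p)"
    have "eta p (?i y1 \<oplus>\<^bsub>fst A p\<^esub> ?i y2) = eta p (?i y1) \<oplus>\<^bsub>fst B p\<^esub> eta p (?i y2)"
      by (rule mh_add[OF h ic[OF y1] ic[OF y2]])
    also have "\<dots> = y1 \<oplus>\<^bsub>fst B p\<^esub> y2" by (simp add: fi y1 y2)
    finally have e: "eta p (?i y1 \<oplus>\<^bsub>fst A p\<^esub> ?i y2) = y1 \<oplus>\<^bsub>fst B p\<^esub> y2" .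
    have c: "?i y1 \<oplus>\<^bsub>fst A p\<^esub> ?i y2 \<in> carrier (fst A p)" by (rule pm.M_add_closed[OF pA ic[OF y1] ic[OF y2]])
    show "?i (y1 \<oplus>\<^bsub>fst B p\<^esub> y2) = ?i y1 \<oplus>\<^bsub>fst A p\<^esub> ?i y2" using if_[OF c] unfolding e .
  next
    fix r y assume r: "r \<in> carrier R" and y: "y \<in> carrier (fst B p)"
    have e: "eta p (r \<odot>\<^bsub>fst A p\<^esub> ?i y) = r \<odot>\<^bsub>fst B p\<^esub> y"
      using mh_smult[OF h r ic[OF y]] fi[OF y] by simp
    have c: "r \<odot>\<^bsub>fst A p\<^esub> ?i y \<in> carrier (fst A p)" by (rule pm.M_smult_closed[OF pA r ic[OF y]])
    show "?i (r \<odot>\<^bsub>fst B p\<^esub> y) = r \<odot>\<^bsub>fst A p\<^esub> ?i y" using if_[OF c] unfolding e .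
  qed
next
  fix p q y assume pq: "p \<le> q" and y: "y \<in> carrier (fst B p)"
  have bp: "bij_betw (eta p) (carrier (fst A p)) (carrier (fst B p))"
    and bq: "bij_betw (eta q) (carrier (fst A q)) (carrier (fst B q))"
    using iso unfolding is_pm_iso_def by blast+
  have nat: "\<And>a. a \<in> carrier (fst A p) \<Longrightarrow> eta q (snd A p q a) = snd B p q (eta p a)"
    using iso pq unfolding is_pm_iso_def by blast
  have yi: "y \<in> eta p ` carrier (fst A p)" using bp y unfolding bij_betw_def by blast
  define a where "a = inv_into (carrier (fst A p)) (eta p) y"
  have a1: "a \<in> carrier (fst A p)" unfolding a_def by (rule inv_into_into[OF yi])
  have a2: "eta p a = y" unfolding a_def by (rule f_inv_into_f[OF yi])
  have c: "snd A p q a \<in> carrier (fst A q)" using pm.Mh_closed[OF pA pq a1] .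
  have "inv_into (carrier (fst A q)) (eta q) (eta q (snd A p q a)) = snd A p q a"
    by (rule inv_into_f_f[OF _ c]) (use bq in \<open>simp add: bij_betw_def\<close>)
  then show "inv_into (carrier (fst A q)) (eta q) (snd B p q y) = snd A p q (inv_into (carrier (fst A p)) (eta p) y)"
    using nat[OF a1] a2 unfolding a_def[symmetric] by simp
qed


locale cpm = pm R M for R :: "'k ring" and M :: "('p::order, 'k, 'm) pmod" +
  assumes cont: "continuous_poset TYPE('p)"

context cpm begin

lemma cp: "cposet TYPE('p)" by (rule cposet.intro[OF cont])
lemma dirJ: "directed {x::'p. x \<lless> p}" by (rule cposet.dir[OF cp])
lemma interp: "x \<lless> (y::'p) \<Longrightarrow> \<exists>z. x \<lless> z \<and> z \<lless> y" by (rule cposet.interp[OF cp])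
lemma interp2: "x1 \<lless> (y::'p) \<Longrightarrow> x2 \<lless> y \<Longrightarrow> \<exists>z. x1 \<lless> z \<and> x2 \<lless> z \<and> z \<lless> y" by (rule cposet.interp2[OF cp])
lemma dir2: "x \<lless> p \<Longrightarrow> y \<lless> p \<Longrightarrow> \<exists>z. z \<lless> p \<and> x \<le> z \<and> y \<le> (z::'p)" by (rule cposet.dir2[OF cp])

definition lext :: "'p \<Rightarrow> 'p \<Rightarrow> ('p \<Rightarrow> 'm) \<Rightarrow> ('p \<Rightarrow> 'm)" where
  "lext p q g = (\<lambda>x. if x \<lless> p then g x else if x \<lless> q then \<zero>\<^bsub>fst M x\<^esub> else undefined)"

lemma lo_fst: "fst (lower R M) p = dir_lim R M {x. x \<lless> p}" by (simp add: lower_def)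
lemma lo_snd: "snd (lower R M) p q A = dlim_cls R M {x. x \<lless> q} (lext p q (rep A))"
  by (simp add: lower_def lext_def)

lemma lext_hom: assumes pq: "p \<le> q"
  shows "mod_hom R (dsum M {x. x \<lless> p}) (dsum M {x. x \<lless> q}) (lext p q)"
proof -
  have sub: "\<And>x. x \<lless> p \<Longrightarrow> x \<lless> q" using pq wb_trans1 by blast
  show ?thesis unfolding mod_hom_def
  proof (intro conjI ballI)
    fix g assume g: "g \<in> carrier (dsum M {x. x \<lless> p})"
    show "lext p q g \<in> carrier (dsum M {x. x \<lless> q})"
    proof (rule ds_carrierI)
      have "supp {x. x \<lless> q} (lext p q g) \<subseteq> supp {x. x \<lless> p} g" by (auto simp: supp_def lext_def)
      then show "finite (supp {x. x \<lless> q} (lext p q g))" using ds_carrierD(3)[OF g] finite_subset by blast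
    qed (use g sub in \<open>auto simp: lext_def ds_carrierD M_closed\<close>)
  next
    fix f g assume f: "f \<in> carrier (dsum M {x. x \<lless> p})" and g: "g \<in> carrier (dsum M {x. x \<lless> p})"
    show "lext p q (f \<oplus>\<^bsub>dsum M {x. x \<lless> p}\<^esub> g) = lext p q f \<oplus>\<^bsub>dsum M {x. x \<lless> q}\<^esub> lext p q g"
      by (intro ext) (use sub in \<open>simp add: lext_def ds_add abelian_monoid.l_zero[OF Mam] M_closed\<close>)
  next
    fix r g assume r: "r \<in> carrier R" and g: "g \<in> carrier (dsum M {x. x \<lless> p})"
    show "lext p q (r \<odot>\<^bsub>dsum M {x. x \<lless> p}\<^esub> g) = r \<odot>\<^bsub>dsum M {x. x \<lless> q}\<^esub> lext p q g"
      by (intro ext) (use sub r in \<open>simp add: lext_def ds_smult module.smult_r_null[OF Mmod]\<close>)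
  qed
qed

lemma lext_ins: "x \<lless> p \<Longrightarrow> p \<le> q \<Longrightarrow> lext p q (dsum_ins M {x. x \<lless> p} x a) = dsum_ins M {x. x \<lless> q} x a"
  by (intro ext) (auto simp: lext_def ins_val dest: wb_trans1)

lemma lext_id: "g \<in> carrier (dsum M {x. x \<lless> p}) \<Longrightarrow> lext p p g = g"
  by (intro ext) (simp add: lext_def ds_carrierD)

lemma lext_comp: "p \<le> q \<Longrightarrow> q \<le> r \<Longrightarrow> lext q r (lext p q g) = lext p r g"
  by (intro ext) (auto simp: lext_def dest: wb_trans1)

lemma lext_rel: assumes pq: "p \<le> q" and f: "f \<in> dlim_rel R M {x. x \<lless> p}"
  shows "lext p q f \<in> dlim_rel R M {x. x \<lless> q}"
proof -
  let ?P = "{f \<in> carrier (dsum M {x. x \<lless> p}). lext p q f \<in> dlim_rel R M {x. x \<lless> q}}"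
  have "dlim_rel R M {x. x \<lless> p} \<subseteq> ?P"
  proof (rule rel_least)
    show "submodule ?P R (dsum M {x. x \<lless> p})"
      by (rule sub_preimage[OF ds_module ds_module lext_hom[OF pq] rel_submodule])
    show "gens {x. x \<lless> p} \<subseteq> ?P"
    proof
      fix g assume "g \<in> gens {x. x \<lless> p}"
      then obtain x y a where g: "g = dsum_ins M {x. x \<lless> p} x a \<ominus>\<^bsub>dsum M {x. x \<lless> p}\<^esub> dsum_ins M {x. x \<lless> p} y (snd M x y a)"
        and xy: "x \<lless> p" "y \<lless> p" "x \<le> y" and a: "a \<in> carrier (fst M x)" unfolding gens_def by blast
      have b: "snd M x y a \<in> carrier (fst M y)" using Mh_closed xy a by blast
      have gc: "g \<in> carrier (dsum M {x. x \<lless> p})" using gens_carrier \<open>g \<in> gens {x. x \<lless> p}\<close> by blast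
      have "lext p q g = dsum_ins M {x. x \<lless> q} x a \<ominus>\<^bsub>dsum M {x. x \<lless> q}\<^esub> dsum_ins M {x. x \<lless> q} y (snd M x y a)"
        unfolding g by (simp add: mh_minus[OF ds_module ds_module lext_hom[OF pq]] ins_carrier xy a b lext_ins pq)
      also have "\<dots> \<in> dlim_rel R M {x. x \<lless> q}"
        by (rule gen_in_rel) (use xy a pq wb_trans1 in auto)
      finally show "g \<in> ?P" using gc by blast
    qed
  qed
  then show ?thesis using f by blast
qed

lemma lower_map:
  assumes pq: "p \<le> q"
  shows "mod_hom R (fst (lower R M) p) (fst (lower R M) q) (snd (lower R M) p q)"
    and "f \<in> carrier (dsum M {x. x \<lless> p}) \<Longrightarrow>
      snd (lower R M) p q (dlim_cls R M {x. x \<lless> p} f) = dlim_cls R M {x. x \<lless> q} (lext p q f)"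
proof -
  have e: "snd (lower R M) p q = (\<lambda>A. qc (dsum M {x. x \<lless> q}) (dlim_rel R M {x. x \<lless> q}) (lext p q (rep A)))"
    by (intro ext) (simp add: lo_snd cls_def2)
  note Q = qind[OF qm qm lext_hom[OF pq] lext_rel[OF pq]]
  show "mod_hom R (fst (lower R M) p) (fst (lower R M) q) (snd (lower R M) p q)"
    unfolding e lo_fst dl_def2 by (rule Q(1))
  show "f \<in> carrier (dsum M {x. x \<lless> p}) \<Longrightarrow>
      snd (lower R M) p q (dlim_cls R M {x. x \<lless> p} f) = dlim_cls R M {x. x \<lless> q} (lext p q f)"
    unfolding e cls_def2 by (rule Q(2))
qed

lemma lo_carrier: "A \<in> carrier (fst (lower R M) p) \<Longrightarrow>
   rep A \<in> carrier (dsum M {x. x \<lless> p}) \<and> dlim_cls R M {x. x \<lless> p} (rep A) = A"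
  unfolding lo_fst dl_def2 cls_def2 using qmod.rep_in[OF qm] by blast

lemma lo_in: "f \<in> carrier (dsum M {x. x \<lless> p}) \<Longrightarrow> dlim_cls R M {x. x \<lless> p} f \<in> carrier (fst (lower R M) p)"
  unfolding lo_fst dl_def2 cls_def2 using qmod.q_in[OF qm] by blast

lemma lower_pm: "pers_mod R (lower R M)"
  unfolding pers_mod_def
proof (intro conjI allI impI ballI)
  fix p show "module R (fst (lower R M) p)" unfolding lo_fst by (rule dl_module)
next
  fix p q :: 'p assume "p \<le> q"
  then show "mod_hom R (fst (lower R M) p) (fst (lower R M) q) (snd (lower R M) p q)" by (rule lower_map(1))
next
  fix p and A assume A: "A \<in> carrier (fst (lower R M) p)"
  then show "snd (lower R M) p p A = A" using lo_carrier[OF A] by (simp add: lo_snd lext_id)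
next
  fix p q r :: 'p and A assume pq: "p \<le> q" and qr: "q \<le> r" and A: "A \<in> carrier (fst (lower R M) p)"
  have rA: "rep A \<in> carrier (dsum M {x. x \<lless> p})" using lo_carrier[OF A] by blast
  have "snd (lower R M) q r (snd (lower R M) p q A) = snd (lower R M) q r (dlim_cls R M {x. x \<lless> q} (lext p q (rep A)))"
    by (simp add: lo_snd)
  also have "\<dots> = dlim_cls R M {x. x \<lless> r} (lext q r (lext p q (rep A)))"
    by (rule lower_map(2)[OF qr]) (rule mh_closed[OF lext_hom[OF pq] rA])
  also have "\<dots> = snd (lower R M) p r A" by (simp add: lo_snd lext_comp[OF pq qr])
  finally show "snd (lower R M) q r (snd (lower R M) p q A) = snd (lower R M) p r A" .
qed

lemma cpm_lower: "cpm R (lower R M)"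
  by (intro cpm.intro pm.intro cpm_axioms.intro cR lower_pm cont)

lemma cpm_upper: "cpm R (upper M)"
  by (intro cpm.intro pm.intro cpm_axioms.intro cR upper_pm cont)

lemma cnt_def2: "lower_counit R M p A = pi {x. x \<lless> p} p (rep A)"
  by (simp add: lower_counit_def pi_def supp_def)

lemma pi_hom_all: assumes "\<forall>x\<in>J. x \<le> z" shows "mod_hom R (dsum M J) (fst M z) (pi J z)"
proof -
  have s: "\<And>f. supp J f \<subseteq> {x. x \<le> z}" using assms supp_sub by blast
  show ?thesis unfolding mod_hom_def using pi_closed pi_add pi_smult s by blast
qed

lemma pi_rel_zero: assumes "directed J" "\<forall>x\<in>J. x \<le> z" "f \<in> dlim_rel R M J"
  shows "pi J z f = \<zero>\<^bsub>fst M z\<^esub>"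
proof -
  obtain w where f: "f \<in> carrier (dsum M J)" and w: "w \<in> J" "supp J f \<subseteq> {x. x \<le> w}" "pi J w f = \<zero>\<^bsub>fst M w\<^esub>"
    using rel_char[OF assms(1)] assms(3) by blast
  have "pi J z f = snd M w z (pi J w f)" using pi_trans[OF f w(2)] assms(2) w(1) by simp
  then show ?thesis using w(3) Mh_zero assms(2) w(1) by simp
qed

lemma Jp_below: "\<forall>x\<in>{x. x \<lless> p}. x \<le> p" using wb_le by blast

lemma counit:
  shows "mod_hom R (fst (lower R M) p) (fst M p) (lower_counit R M p)"
    and "f \<in> carrier (dsum M {x. x \<lless> p}) \<Longrightarrow> lower_counit R M p (dlim_cls R M {x. x \<lless> p} f) = pi {x. x \<lless> p} p f"
proof -
  have e: "lower_counit R M p = (\<lambda>A. pi {x. x \<lless> p} p (rep A))" by (intro ext) (simp add: cnt_def2)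
  note Q = qout[OF qm Mmod pi_hom_all[OF Jp_below] pi_rel_zero[OF dirJ Jp_below]]
  show "mod_hom R (fst (lower R M) p) (fst M p) (lower_counit R M p)"
    unfolding e lo_fst dl_def2 by (rule Q(1))
  show "f \<in> carrier (dsum M {x. x \<lless> p}) \<Longrightarrow> lower_counit R M p (dlim_cls R M {x. x \<lless> p} f) = pi {x. x \<lless> p} p f"
    unfolding e cls_def2 by (rule Q(2))
qed

end


locale interl = A: cpm R A + B: cpm R B
  for R :: "'k ring" and A :: "('p::order, 'k, 'a) pmod" and B :: "('p, 'k, 'b) pmod" +
  fixes phi :: "'p \<Rightarrow> 'a \<Rightarrow> 'b" and psi :: "'p \<Rightarrow> 'p \<Rightarrow> 'b \<Rightarrow> 'a"
  assumes phi_hom: "mod_hom R (fst A x) (fst B x) (phi x)"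
    and phi_nat: "x \<le> y \<Longrightarrow> a \<in> carrier (fst A x) \<Longrightarrow> phi y (snd A x y a) = snd B x y (phi x a)"
    and psi_closed: "x \<lless> y \<Longrightarrow> b \<in> carrier (fst B x) \<Longrightarrow> psi x y b \<in> carrier (fst A y)"
    and psi_phi: "x \<lless> y \<Longrightarrow> a \<in> carrier (fst A x) \<Longrightarrow> psi x y (phi x a) = snd A x y a"
    and phi_psi: "x \<lless> y \<Longrightarrow> b \<in> carrier (fst B x) \<Longrightarrow> phi y (psi x y b) = snd B x y b"
    and psi_nat: "x \<lless> z \<Longrightarrow> z \<le> y \<Longrightarrow> b \<in> carrier (fst B x) \<Longrightarrow> snd A z y (psi x z b) = psi x y b"
begin

lemma phi_closed: "a \<in> carrier (fst A x) \<Longrightarrow> phi x a \<in> carrier (fst B x)"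
  by (rule mh_closed[OF phi_hom])

lemma phi_zero: "phi x \<zero>\<^bsub>fst A x\<^esub> = \<zero>\<^bsub>fst B x\<^esub>"
  by (rule mh_zero[OF A.Mmod B.Mmod phi_hom])

definition umap :: "'p \<Rightarrow> ('p \<Rightarrow> 'a) \<Rightarrow> ('p \<Rightarrow> 'b)" where
  "umap p f = (\<lambda>x. if p \<lless> x then phi x (f x) else undefined)"

lemma upA: "f \<in> carrier (fst (upper A) p) \<longleftrightarrow>
   (\<forall>x. p \<lless> x \<longrightarrow> f x \<in> carrier (fst A x)) \<and> (\<forall>x. \<not> p \<lless> x \<longrightarrow> f x = undefined) \<and>
   (\<forall>x y. p \<lless> x \<longrightarrow> p \<lless> y \<longrightarrow> x \<le> y \<longrightarrow> snd A x y (f x) = f y)"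
  by (simp add: A.up_fst A.il_carrier)

lemma upB: "g \<in> carrier (fst (upper B) p) \<longleftrightarrow>
   (\<forall>x. p \<lless> x \<longrightarrow> g x \<in> carrier (fst B x)) \<and> (\<forall>x. \<not> p \<lless> x \<longrightarrow> g x = undefined) \<and>
   (\<forall>x y. p \<lless> x \<longrightarrow> p \<lless> y \<longrightarrow> x \<le> y \<longrightarrow> snd B x y (g x) = g y)"
  by (simp add: B.up_fst B.il_carrier)

lemma umap_closed: assumes f: "f \<in> carrier (fst (upper A) p)" shows "umap p f \<in> carrier (fst (upper B) p)"
  unfolding upB
proof (intro conjI allI impI)
  fix x assume "p \<lless> x" then show "umap p f x \<in> carrier (fst B x)"
    using f phi_closed by (simp add: upA umap_def)
next
  fix x assume "\<not> p \<lless> x" then show "umap p f x = undefined" by (simp add: umap_def)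
next
  fix x y assume xy: "p \<lless> x" "p \<lless> y" "x \<le> y"
  have fx: "f x \<in> carrier (fst A x)" and fy: "snd A x y (f x) = f y" using f xy by (auto simp: upA)
  show "snd B x y (umap p f x) = umap p f y" using xy phi_nat[OF xy(3) fx] fy by (simp add: umap_def)
qed

lemma umap_hom: "mod_hom R (fst (upper A) p) (fst (upper B) p) (umap p)"
  unfolding mod_hom_def
proof (intro conjI ballI)
  fix f assume "f \<in> carrier (fst (upper A) p)" then show "umap p f \<in> carrier (fst (upper B) p)" by (rule umap_closed)
next
  fix f g assume f: "f \<in> carrier (fst (upper A) p)" and g: "g \<in> carrier (fst (upper A) p)"
  show "umap p (f \<oplus>\<^bsub>fst (upper A) p\<^esub> g) = umap p f \<oplus>\<^bsub>fst (upper B) p\<^esub> umap p g"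
  proof (rule ext)
    fix x show "umap p (f \<oplus>\<^bsub>fst (upper A) p\<^esub> g) x = (umap p f \<oplus>\<^bsub>fst (upper B) p\<^esub> umap p g) x"
      using f g by (simp add: umap_def A.up_fst B.up_fst A.il_add B.il_add A.il_carrier mh_add[OF phi_hom])
  qed
next
  fix r f assume r: "r \<in> carrier R" and f: "f \<in> carrier (fst (upper A) p)"
  show "umap p (r \<odot>\<^bsub>fst (upper A) p\<^esub> f) = r \<odot>\<^bsub>fst (upper B) p\<^esub> umap p f"
  proof (rule ext)
    fix x show "umap p (r \<odot>\<^bsub>fst (upper A) p\<^esub> f) x = (r \<odot>\<^bsub>fst (upper B) p\<^esub> umap p f) x"
      using f r by (simp add: umap_def A.up_fst B.up_fst A.il_smult B.il_smult A.il_carrier mh_smult[OF phi_hom])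
  qed
qed

lemma umap_inj: "inj_on (umap p) (carrier (fst (upper A) p))"
proof (rule inj_onI)
  fix f f' assume f: "f \<in> carrier (fst (upper A) p)" and f': "f' \<in> carrier (fst (upper A) p)" and e: "umap p f = umap p f'"
  show "f = f'"
  proof (rule ext)
    fix y show "f y = f' y"
    proof (cases "p \<lless> y")
      case True
      then obtain x where x: "p \<lless> x" "x \<lless> y" using A.interp by blast
      have xy: "x \<le> y" using x wb_le by blast
      have "f y = snd A x y (f x)" using f x True xy by (simp add: upA)
      also have "\<dots> = psi x y (phi x (f x))" using psi_phi[OF x(2)] f x by (simp add: upA)
      also have "phi x (f x) = phi x (f' x)" using fun_cong[OF e, of x] x by (simp add: umap_def)
      also have "psi x y (phi x (f' x)) = snd A x y (f' x)" using psi_phi[OF x(2)] f' x by (simp add: upA)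
      also have "\<dots> = f' y" using f' x True xy by (simp add: upA)
      finally show ?thesis .
    next
      case False then show ?thesis using f f' by (simp add: upA)
    qed
  qed
qed

lemma umap_surj: assumes g: "g \<in> carrier (fst (upper B) p)"
  shows "\<exists>f\<in>carrier (fst (upper A) p). umap p f = g"
proof -
  have gc: "\<And>x. p \<lless> x \<Longrightarrow> g x \<in> carrier (fst B x)" and gu: "\<And>x. \<not> p \<lless> x \<Longrightarrow> g x = undefined"
    and gn: "\<And>x y. p \<lless> x \<Longrightarrow> p \<lless> y \<Longrightarrow> x \<le> y \<Longrightarrow> snd B x y (g x) = g y" using g by (simp_all add: upB)
  have key: "\<And>x z y. p \<lless> x \<Longrightarrow> x \<lless> z \<Longrightarrow> z \<lless> y \<Longrightarrow> psi x y (g x) = psi z y (g z)"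
  proof -
    fix x z y assume px: "p \<lless> x" and xz: "x \<lless> z" and zy: "z \<lless> y"
    have pz: "p \<lless> z" using px xz wb_wb by blast
    have c: "psi x z (g x) \<in> carrier (fst A z)" using psi_closed[OF xz gc[OF px]] .
    have "psi x y (g x) = snd A z y (psi x z (g x))" using psi_nat[OF xz wb_le[OF zy] gc[OF px]] by simp
    also have "\<dots> = psi z y (phi z (psi x z (g x)))" using psi_phi[OF zy c] by simp
    also have "\<dots> = psi z y (snd B x z (g x))" using phi_psi[OF xz gc[OF px]] by simp
    also have "\<dots> = psi z y (g z)" using gn[OF px pz wb_le[OF xz]] by simp
    finally show "psi x y (g x) = psi z y (g z)" .
  qed
  have wd: "\<And>x1 x2 y. p \<lless> x1 \<Longrightarrow> x1 \<lless> y \<Longrightarrow> p \<lless> x2 \<Longrightarrow> x2 \<lless> y \<Longrightarrow> psi x1 y (g x1) = psi x2 y (g x2)"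
  proof -
    fix x1 x2 y assume a: "p \<lless> x1" "x1 \<lless> y" "p \<lless> x2" "x2 \<lless> y"
    obtain z where z: "x1 \<lless> z" "x2 \<lless> z" "z \<lless> y" using A.interp2[OF a(2) a(4)] by blast
    show "psi x1 y (g x1) = psi x2 y (g x2)" using key[OF a(1) z(1) z(3)] key[OF a(3) z(2) z(3)] by simp
  qed
  define c where "c y = (SOME x. p \<lless> x \<and> x \<lless> y)" for y
  have cy: "\<And>y. p \<lless> y \<Longrightarrow> p \<lless> c y \<and> c y \<lless> y"
    unfolding c_def by (rule someI_ex) (rule A.interp)
  define f where "f y = (if p \<lless> y then psi (c y) y (g (c y)) else undefined)" for y
  have fwd: "\<And>x y. p \<lless> x \<Longrightarrow> x \<lless> y \<Longrightarrow> f y = psi x y (g x)"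
  proof -
    fix x y assume "p \<lless> x" "x \<lless> y"
    moreover then have "p \<lless> y" using wb_wb by blast
    ultimately show "f y = psi x y (g x)" using wd cy unfolding f_def by metis
  qed
  have fc: "f \<in> carrier (fst (upper A) p)" unfolding upA
  proof (intro conjI allI impI)
    fix x assume "p \<lless> x" then show "f x \<in> carrier (fst A x)"
      using cy psi_closed gc unfolding f_def by auto
  next
    fix x assume "\<not> p \<lless> x" then show "f x = undefined" unfolding f_def by simp
  next
    fix x y assume xy: "p \<lless> x" "p \<lless> y" "x \<le> y"
    have c: "p \<lless> c x" "c x \<lless> x" using cy xy by auto
    have "snd A x y (f x) = snd A x y (psi (c x) x (g (c x)))" using xy unfolding f_def by simp
    also have "\<dots> = psi (c x) y (g (c x))" using psi_nat[OF c(2) xy(3) gc[OF c(1)]] .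
    also have "\<dots> = f y" using fwd[OF c(1)] c(2) xy(3) wb_trans1 by metis
    finally show "snd A x y (f x) = f y" .
  qed
  have "umap p f = g"
  proof (rule ext)
    fix x show "umap p f x = g x"
    proof (cases "p \<lless> x")
      case True
      then have c: "p \<lless> c x" "c x \<lless> x" using cy by auto
      have "umap p f x = phi x (psi (c x) x (g (c x)))" using True by (simp add: umap_def f_def)
      also have "\<dots> = snd B (c x) x (g (c x))" using phi_psi[OF c(2) gc[OF c(1)]] .
      also have "\<dots> = g x" using gn[OF c(1) True wb_le[OF c(2)]] .
      finally show ?thesis .
    next
      case False then show ?thesis by (simp add: umap_def gu)
    qed
  qed
  then show ?thesis using fc by blast
qed

theorem up_iso: "is_pm_iso R (upper A) (upper B) umap"
  unfolding is_pm_iso_def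
proof (intro conjI allI impI ballI)
  fix p
  show "mod_hom R (fst (upper A) p) (fst (upper B) p) (umap p)" by (rule umap_hom)
  show "bij_betw (umap p) (carrier (fst (upper A) p)) (carrier (fst (upper B) p))"
    unfolding bij_betw_def using umap_inj umap_closed umap_surj by blast
next
  fix p q f assume pq: "p \<le> q" and f: "f \<in> carrier (fst (upper A) p)"
  have sub: "\<And>x. q \<lless> x \<Longrightarrow> p \<lless> x" using pq wb_trans2 by blast
  show "umap q (snd (upper A) p q f) = snd (upper B) p q (umap p f)"
    by (intro ext) (simp add: umap_def A.up_snd B.up_snd sub)
qed

end


context interl begin

definition Phi :: "'p \<Rightarrow> ('p \<Rightarrow> 'a) \<Rightarrow> ('p \<Rightarrow> 'b)" where
  "Phi p g = (\<lambda>x. if x \<lless> p then phi x (g x) else undefined)"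

definition lmap :: "'p \<Rightarrow> ('p \<Rightarrow> 'a) set \<Rightarrow> ('p \<Rightarrow> 'b) set" where
  "lmap p X = dlim_cls R B {x. x \<lless> p} (Phi p (rep X))"

lemma supp_Phi: "g \<in> carrier (dsum A {x. x \<lless> p}) \<Longrightarrow> B.supp {x. x \<lless> p} (Phi p g) \<subseteq> A.supp {x. x \<lless> p} g"
  by (auto simp: B.supp_def A.supp_def Phi_def phi_zero)

lemma Phi_hom: "mod_hom R (dsum A {x. x \<lless> p}) (dsum B {x. x \<lless> p}) (Phi p)"
  unfolding mod_hom_def
proof (intro conjI ballI)
  fix g assume g: "g \<in> carrier (dsum A {x. x \<lless> p})"
  show "Phi p g \<in> carrier (dsum B {x. x \<lless> p})"
  proof (rule B.ds_carrierI)
    show "finite (B.supp {x. x \<lless> p} (Phi p g))"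
      using supp_Phi[OF g] A.ds_carrierD(3)[OF g] finite_subset by blast
  qed (use g in \<open>auto simp: Phi_def A.ds_carrierD phi_closed\<close>)
next
  fix f g assume f: "f \<in> carrier (dsum A {x. x \<lless> p})" and g: "g \<in> carrier (dsum A {x. x \<lless> p})"
  show "Phi p (f \<oplus>\<^bsub>dsum A {x. x \<lless> p}\<^esub> g) = Phi p f \<oplus>\<^bsub>dsum B {x. x \<lless> p}\<^esub> Phi p g"
    by (intro ext) (use f g in \<open>simp add: Phi_def A.ds_add B.ds_add A.ds_carrierD mh_add[OF phi_hom]\<close>)
next
  fix r g assume r: "r \<in> carrier R" and g: "g \<in> carrier (dsum A {x. x \<lless> p})"
  show "Phi p (r \<odot>\<^bsub>dsum A {x. x \<lless> p}\<^esub> g) = r \<odot>\<^bsub>dsum B {x. x \<lless> p}\<^esub> Phi p g"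
    by (intro ext) (use r g in \<open>simp add: Phi_def A.ds_smult B.ds_smult A.ds_carrierD mh_smult[OF phi_hom]\<close>)
qed

lemma Phi_ins: "x \<lless> p \<Longrightarrow> Phi p (dsum_ins A {x. x \<lless> p} x a) = dsum_ins B {x. x \<lless> p} x (phi x a)"
  by (intro ext) (simp add: Phi_def A.ins_val B.ins_val phi_zero)

lemma Phi_rel: assumes f: "f \<in> dlim_rel R A {x. x \<lless> p}"
  shows "Phi p f \<in> dlim_rel R B {x. x \<lless> p}"
proof -
  let ?P = "{f \<in> carrier (dsum A {x. x \<lless> p}). Phi p f \<in> dlim_rel R B {x. x \<lless> p}}"
  have "dlim_rel R A {x. x \<lless> p} \<subseteq> ?P"
  proof (rule A.rel_least)
    show "submodule ?P R (dsum A {x. x \<lless> p})"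
      by (rule sub_preimage[OF A.ds_module B.ds_module Phi_hom B.rel_submodule])
    show "A.gens {x. x \<lless> p} \<subseteq> ?P"
    proof
      fix g assume gg: "g \<in> A.gens {x. x \<lless> p}"
      then obtain x y a where g: "g = dsum_ins A {x. x \<lless> p} x a \<ominus>\<^bsub>dsum A {x. x \<lless> p}\<^esub> dsum_ins A {x. x \<lless> p} y (snd A x y a)"
        and xy: "x \<lless> p" "y \<lless> p" "x \<le> y" and a: "a \<in> carrier (fst A x)" unfolding A.gens_def by blast
      have b: "snd A x y a \<in> carrier (fst A y)" using A.Mh_closed xy a by blast
      have gc: "g \<in> carrier (dsum A {x. x \<lless> p})" using A.gens_carrier gg by blast
      have "Phi p g = dsum_ins B {x. x \<lless> p} x (phi x a) \<ominus>\<^bsub>dsum B {x. x \<lless> p}\<^esub> dsum_ins B {x. x \<lless> p} y (snd B x y (phi x a))"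
        unfolding g by (simp add: mh_minus[OF A.ds_module B.ds_module Phi_hom] A.ins_carrier xy a b Phi_ins phi_nat)
      also have "\<dots> \<in> dlim_rel R B {x. x \<lless> p}"
        by (rule B.gen_in_rel) (use xy a phi_closed in auto)
      finally show "g \<in> ?P" using gc by blast
    qed
  qed
  then show ?thesis using f by blast
qed

lemma lmap:
  shows "mod_hom R (fst (lower R A) p) (fst (lower R B) p) (lmap p)"
    and "f \<in> carrier (dsum A {x. x \<lless> p}) \<Longrightarrow>
      lmap p (dlim_cls R A {x. x \<lless> p} f) = dlim_cls R B {x. x \<lless> p} (Phi p f)"
proof -
  have e: "lmap p = (\<lambda>X. qc (dsum B {x. x \<lless> p}) (dlim_rel R B {x. x \<lless> p}) (Phi p (rep X)))"
    by (intro ext) (simp add: lmap_def B.cls_def2)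
  note Q = qind[OF A.qm B.qm Phi_hom Phi_rel]
  show "mod_hom R (fst (lower R A) p) (fst (lower R B) p) (lmap p)"
    unfolding e A.lo_fst B.lo_fst A.dl_def2 B.dl_def2 by (rule Q(1))
  show "f \<in> carrier (dsum A {x. x \<lless> p}) \<Longrightarrow>
      lmap p (dlim_cls R A {x. x \<lless> p} f) = dlim_cls R B {x. x \<lless> p} (Phi p f)"
    unfolding e A.cls_def2 B.cls_def2 by (rule Q(2))
qed

lemma pi_Phi:
  assumes g: "g \<in> carrier (dsum A {x. x \<lless> p})" and sg: "A.supp {x. x \<lless> p} g \<subseteq> {x. x \<le> z}"
  shows "B.pi {x. x \<lless> p} z (Phi p g) = phi z (A.pi {x. x \<lless> p} z g)"
proof -
  let ?S = "A.supp {x. x \<lless> p} g"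
  have fin: "finite ?S" using A.ds_carrierD(3)[OF g] .
  have sub: "?S \<subseteq> {x. x \<lless> p}" "\<forall>x\<in>?S. x \<le> z" using sg A.supp_sub by blast+
  have Pg: "Phi p g \<in> carrier (dsum B {x. x \<lless> p})" using mh_closed[OF Phi_hom g] .
  have "B.pi {x. x \<lless> p} z (Phi p g) = finsum (fst B z) (\<lambda>x. snd B x z (Phi p g x)) ?S"
    by (rule B.pi_S[OF Pg fin supp_Phi[OF g] sub])
  also have "\<dots> = finsum (fst B z) (\<lambda>x. phi z (snd A x z (g x))) ?S"
  proof (rule abelian_monoid.finsum_cong'[OF B.Mam refl])
    show "(\<lambda>x. phi z (snd A x z (g x))) \<in> ?S \<rightarrow> carrier (fst B z)"
      using A.pi_fun[OF g sub] phi_closed by blast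
    fix i assume i: "i \<in> ?S"
    then have "i \<lless> p" "i \<le> z" using sub by auto
    then show "snd B i z (Phi p g i) = phi z (snd A i z (g i))"
      using phi_nat A.ds_carrierD(1)[OF g] by (simp add: Phi_def)
  qed
  also have "\<dots> = phi z (A.pi {x. x \<lless> p} z g)"
    unfolding A.pi_def by (rule mh_finsum[OF A.Mmod B.Mmod phi_hom fin A.pi_fun[OF g sub], symmetric])
  finally show ?thesis .
qed

lemma psi_zero: "x \<lless> y \<Longrightarrow> psi x y \<zero>\<^bsub>fst B x\<^esub> = \<zero>\<^bsub>fst A y\<^esub>"
  using psi_phi[of x y "\<zero>\<^bsub>fst A x\<^esub>"] phi_zero A.M_zero_closed A.Mh_zero wb_le by metis

lemma lmap_ker:
  assumes X: "X \<in> carrier (fst (lower R A) p)" and z: "lmap p X = \<zero>\<^bsub>fst (lower R B) p\<^esub>"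
  shows "X = \<zero>\<^bsub>fst (lower R A) p\<^esub>"
proof -
  let ?J = "{x. x \<lless> p}"
  define g where "g = rep X"
  have g: "g \<in> carrier (dsum A ?J)" and Xg: "X = dlim_cls R A ?J g" using A.lo_carrier[OF X] unfolding g_def by auto
  have Pg: "Phi p g \<in> carrier (dsum B ?J)" using mh_closed[OF Phi_hom g] .
  have "Phi p g \<in> dlim_rel R B ?J"
    using z qmod.qc_zero_iff[OF B.qm Pg] unfolding lmap_def g_def[symmetric] B.lo_fst B.dl_def2 B.cls_def2 by simp
  then obtain z where zJ: "z \<lless> p" and sz: "B.supp ?J (Phi p g) \<subseteq> {x. x \<le> z}" and pz: "B.pi ?J z (Phi p g) = \<zero>\<^bsub>fst B z\<^esub>"
    using B.rel_char[OF A.dirJ] by blast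
  obtain z0 where z0: "z0 \<lless> p" "\<forall>x\<in>A.supp ?J g. x \<le> z0"
    using dir_bound[OF A.dirJ A.ds_carrierD(3)[OF g] A.supp_sub] by auto
  obtain z1 where z1: "z1 \<lless> p" "z \<le> z1" "z0 \<le> z1" using A.dir2[OF zJ z0(1)] by blast
  have sg1: "A.supp ?J g \<subseteq> {x. x \<le> z1}" using z0 z1 order_trans by blast
  have "B.pi ?J z1 (Phi p g) = snd B z z1 (B.pi ?J z (Phi p g))" using B.pi_trans[OF Pg sz z1(2)] by simp
  then have "B.pi ?J z1 (Phi p g) = \<zero>\<^bsub>fst B z1\<^esub>" using pz B.Mh_zero[OF z1(2)] by simp
  then have pz1: "phi z1 (A.pi ?J z1 g) = \<zero>\<^bsub>fst B z1\<^esub>" using pi_Phi[OF g sg1] by simp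
  obtain w where w: "z1 \<lless> w" "w \<lless> p" using A.interp[OF z1(1)] by blast
  have "A.pi ?J w g = snd A z1 w (A.pi ?J z1 g)" using A.pi_trans[OF g sg1 wb_le[OF w(1)]] by simp
  also have "\<dots> = psi z1 w (phi z1 (A.pi ?J z1 g))" using psi_phi[OF w(1) A.pi_closed[OF g sg1]] by simp
  also have "\<dots> = \<zero>\<^bsub>fst A w\<^esub>" using pz1 psi_zero[OF w(1)] by simp
  finally have "A.pi ?J w g = \<zero>\<^bsub>fst A w\<^esub>" .
  moreover have "A.supp ?J g \<subseteq> {x. x \<le> w}" using sg1 wb_le[OF w(1)] order_trans by blast
  ultimately have "g \<in> dlim_rel R A ?J" using A.relE_rel[OF g] w(2) by simp
  then show ?thesis using Xg qmod.qc_zero_iff[OF A.qm g] unfolding A.lo_fst A.dl_def2 A.cls_def2 by simp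
qed

lemma lmap_surj:
  assumes Y: "Y \<in> carrier (fst (lower R B) p)"
  shows "\<exists>X\<in>carrier (fst (lower R A) p). lmap p X = Y"
proof -
  let ?J = "{x. x \<lless> p}"
  define g where "g = rep Y"
  have g: "g \<in> carrier (dsum B ?J)" and Yg: "Y = dlim_cls R B ?J g" using B.lo_carrier[OF Y] unfolding g_def by auto
  obtain z where z: "z \<lless> p" "\<forall>x\<in>B.supp ?J g. x \<le> z"
    using dir_bound[OF A.dirJ B.ds_carrierD(3)[OF g] B.supp_sub] by auto
  have sg: "B.supp ?J g \<subseteq> {x. x \<le> z}" using z by blast
  define b where "b = B.pi ?J z g"
  have b: "b \<in> carrier (fst B z)" unfolding b_def by (rule B.pi_closed[OF g sg])
  have Y2: "Y = dlim_cls R B ?J (dsum_ins B ?J z b)" using Yg B.collapse_cls[OF g _ sg] z(1) unfolding b_def by simp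
  obtain w where w: "z \<lless> w" "w \<lless> p" using A.interp[OF z(1)] by blast
  define a where "a = psi z w b"
  have a: "a \<in> carrier (fst A w)" unfolding a_def by (rule psi_closed[OF w(1) b])
  have ic: "dsum_ins A ?J w a \<in> carrier (dsum A ?J)" using A.ins_carrier w(2) a by simp
  have "lmap p (dlim_cls R A ?J (dsum_ins A ?J w a)) = dlim_cls R B ?J (dsum_ins B ?J w (phi w a))"
    using lmap(2)[OF ic] Phi_ins w(2) by simp
  also have "phi w a = snd B z w b" unfolding a_def by (rule phi_psi[OF w(1) b])
  also have "dlim_cls R B ?J (dsum_ins B ?J w (snd B z w b)) = dlim_cls R B ?J (dsum_ins B ?J z b)"
    using B.move_cls[of z ?J w b] z(1) w(2) wb_le[OF w(1)] b by simp
  finally have "lmap p (dlim_cls R A ?J (dsum_ins A ?J w a)) = Y" using Y2 by simp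
  moreover have "dlim_cls R A ?J (dsum_ins A ?J w a) \<in> carrier (fst (lower R A) p)" by (rule A.lo_in[OF ic])
  ultimately show ?thesis by blast
qed

theorem lo_iso: "is_pm_iso R (lower R A) (lower R B) lmap"
  unfolding is_pm_iso_def
proof (intro conjI allI impI ballI)
  fix p
  show h: "mod_hom R (fst (lower R A) p) (fst (lower R B) p) (lmap p)" by (rule lmap(1))
  have inj: "inj_on (lmap p) (carrier (fst (lower R A) p))"
    by (rule mh_inj[OF pm.Mmod[OF cpm.axioms(1)[OF A.cpm_lower]] pm.Mmod[OF cpm.axioms(1)[OF B.cpm_lower]] h lmap_ker])
  show "bij_betw (lmap p) (carrier (fst (lower R A) p)) (carrier (fst (lower R B) p))"
    unfolding bij_betw_def using inj mh_closed[OF h] lmap_surj by blast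
next
  fix p q X assume pq: "p \<le> q" and X: "X \<in> carrier (fst (lower R A) p)"
  let ?Jp = "{x. x \<lless> p}" and ?Jq = "{x. x \<lless> q}"
  define g where "g = rep X"
  have g: "g \<in> carrier (dsum A ?Jp)" using A.lo_carrier[OF X] unfolding g_def by auto
  have eg: "A.lext p q g \<in> carrier (dsum A ?Jq)" by (rule mh_closed[OF A.lext_hom[OF pq] g])
  have Pg: "Phi p g \<in> carrier (dsum B ?Jp)" by (rule mh_closed[OF Phi_hom g])
  have sub: "\<And>x. x \<lless> p \<Longrightarrow> x \<lless> q" using pq wb_trans1 by blast
  have ee: "Phi q (A.lext p q g) = B.lext p q (Phi p g)"
    by (intro ext) (simp add: Phi_def A.lext_def B.lext_def phi_zero sub)
  have "lmap q (snd (lower R A) p q X) = lmap q (dlim_cls R A ?Jq (A.lext p q g))"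
    by (simp add: A.lo_snd g_def)
  also have "\<dots> = dlim_cls R B ?Jq (Phi q (A.lext p q g))" by (rule lmap(2)[OF eg])
  also have "\<dots> = dlim_cls R B ?Jq (B.lext p q (Phi p g))" by (simp add: ee)
  also have "\<dots> = snd (lower R B) p q (dlim_cls R B ?Jp (Phi p g))" by (rule B.lower_map(2)[OF pq Pg, symmetric])
  also have "\<dots> = snd (lower R B) p q (lmap p X)" by (simp add: lmap_def g_def)
  finally show "lmap q (snd (lower R A) p q X) = snd (lower R B) p q (lmap p X)" .
qed

end


context cpm begin

lemma cpm_self: "cpm R M" by (intro cpm.intro pm.intro cpm_axioms.intro cR pmM cont)

lemma eta_interl: "interl R M (upper M) (upper_unit M) (\<lambda>x y f. f y)"
proof (intro interl.intro interl_axioms.intro cpm_self cpm_upper)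
  fix x
  show "mod_hom R (fst M x) (fst (upper M) x) (upper_unit M x)"
    unfolding mod_hom_def
  proof (intro conjI ballI)
    fix a assume "a \<in> carrier (fst M x)" then show "upper_unit M x a \<in> carrier (fst (upper M) x)" by (rule unit_in)
  next
    fix a b assume a: "a \<in> carrier (fst M x)" and b: "b \<in> carrier (fst M x)"
    show "upper_unit M x (a \<oplus>\<^bsub>fst M x\<^esub> b) = upper_unit M x a \<oplus>\<^bsub>fst (upper M) x\<^esub> upper_unit M x b"
      by (intro ext) (simp add: upper_unit_def up_fst il_add Mh_add[OF wb_le] a b)
  next
    fix r a assume r: "r \<in> carrier R" and a: "a \<in> carrier (fst M x)"
    show "upper_unit M x (r \<odot>\<^bsub>fst M x\<^esub> a) = r \<odot>\<^bsub>fst (upper M) x\<^esub> upper_unit M x a"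
      by (intro ext) (simp add: upper_unit_def up_fst il_smult Mh_smult[OF wb_le] r a)
  qed
next
  fix x y a assume xy: "x \<le> y" and a: "a \<in> carrier (fst M x)"
  have "\<And>z. y \<lless> z \<Longrightarrow> x \<lless> z" using xy wb_trans2 by blast
  then show "upper_unit M y (snd M x y a) = snd (upper M) x y (upper_unit M x a)"
    by (intro ext) (simp add: upper_unit_def up_snd Mcomp[OF xy wb_le] a)
next
  fix x y f assume "x \<lless> y" "f \<in> carrier (fst (upper M) x)"
  then show "f y \<in> carrier (fst M y)" by (simp add: up_fst il_carrier)
next
  fix x y a assume "x \<lless> y" "a \<in> carrier (fst M x)"
  then show "upper_unit M x a y = snd M x y a" by (simp add: upper_unit_def)
next
  fix x y f assume xy: "x \<lless> y" and f: "f \<in> carrier (fst (upper M) x)"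
  show "upper_unit M y (f y) = snd (upper M) x y f"
  proof (rule ext)
    fix z show "upper_unit M y (f y) z = snd (upper M) x y f z"
    proof (cases "y \<lless> z")
      case True
      then have "x \<lless> z" using xy wb_wb by blast
      then show ?thesis using f True xy wb_le[OF True] by (simp add: upper_unit_def up_snd up_fst il_carrier)
    next
      case False then show ?thesis by (simp add: upper_unit_def up_snd)
    qed
  qed
next
  fix x z y f assume xz: "x \<lless> z" and zy: "z \<le> y" and f: "f \<in> carrier (fst (upper M) x)"
  have "x \<lless> y" using xz zy wb_trans1 by blast
  then show "snd M z y (f z) = f y" using f xz zy by (simp add: up_fst il_carrier)
qed

lemma pi_lext:
  assumes xy: "x \<le> y" and g: "g \<in> carrier (dsum M {w. w \<lless> x})" and t: "supp {w. w \<lless> x} g \<subseteq> {w. w \<le> t}"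
  shows "pi {w. w \<lless> y} t (lext x y g) = pi {w. w \<lless> x} t g"
proof -
  have sub: "\<And>w. w \<lless> x \<Longrightarrow> w \<lless> y" using xy wb_trans1 by blast
  have s: "supp {w. w \<lless> y} (lext x y g) = supp {w. w \<lless> x} g"
    by (auto simp: supp_def lext_def sub)
  show ?thesis unfolding pi_def s
  proof (rule abelian_monoid.finsum_cong'[OF Mam refl])
    show "(\<lambda>w. snd M w t (g w)) \<in> supp {w. w \<lless> x} g \<rightarrow> carrier (fst M t)" by (rule pi_fun2[OF g t])
    fix i assume "i \<in> supp {w. w \<lless> x} g"
    then show "snd M i t (lext x y g i) = snd M i t (g i)" by (simp add: supp_def lext_def)
  qed
qed

lemma eps_interl: "interl R (lower R M) M (lower_counit R M) (\<lambda>x y a. dlim_cls R M {w. w \<lless> y} (dsum_ins M {w. w \<lless> y} x a))"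
proof (intro interl.intro interl_axioms.intro cpm_self cpm_lower)
  fix x show "mod_hom R (fst (lower R M) x) (fst M x) (lower_counit R M x)" by (rule counit(1))
next
  fix x y X assume xy: "x \<le> y" and X: "X \<in> carrier (fst (lower R M) x)"
  define g where "g = rep X"
  have g: "g \<in> carrier (dsum M {w. w \<lless> x})" using lo_carrier[OF X] unfolding g_def by auto
  have sg: "supp {w. w \<lless> x} g \<subseteq> {w. w \<le> x}" using supp_sub wb_le by blast
  have sgy: "supp {w. w \<lless> x} g \<subseteq> {w. w \<le> y}" using sg xy order_trans by blast
  have eg: "lext x y g \<in> carrier (dsum M {w. w \<lless> y})" by (rule mh_closed[OF lext_hom[OF xy] g])
  have "lower_counit R M y (snd (lower R M) x y X) = lower_counit R M y (dlim_cls R M {w. w \<lless> y} (lext x y g))"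
    by (simp add: lo_snd g_def)
  also have "\<dots> = pi {w. w \<lless> y} y (lext x y g)" by (rule counit(2)[OF eg])
  also have "\<dots> = pi {w. w \<lless> x} y g" by (rule pi_lext[OF xy g sgy])
  also have "\<dots> = snd M x y (pi {w. w \<lless> x} x g)" by (rule pi_trans[OF g sg xy, symmetric])
  also have "\<dots> = snd M x y (lower_counit R M x X)" by (simp add: cnt_def2 g_def)
  finally show "lower_counit R M y (snd (lower R M) x y X) = snd M x y (lower_counit R M x X)" .
next
  fix x y a assume xy: "x \<lless> y" and a: "a \<in> carrier (fst M x)"
  show "dlim_cls R M {w. w \<lless> y} (dsum_ins M {w. w \<lless> y} x a) \<in> carrier (fst (lower R M) y)"
    by (rule lo_in[OF ins_carrier]) (use xy a in auto)
next
  fix x y X assume xy: "x \<lless> y" and X: "X \<in> carrier (fst (lower R M) x)"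
  define g where "g = rep X"
  have g: "g \<in> carrier (dsum M {w. w \<lless> x})" using lo_carrier[OF X] unfolding g_def by auto
  have sg: "supp {w. w \<lless> x} g \<subseteq> {w. w \<le> x}" using supp_sub wb_le by blast
  have xy': "x \<le> y" using wb_le[OF xy] .
  have eg: "lext x y g \<in> carrier (dsum M {w. w \<lless> y})" by (rule mh_closed[OF lext_hom[OF xy'] g])
  have seg: "supp {w. w \<lless> y} (lext x y g) \<subseteq> {w. w \<le> x}"
    using sg by (auto simp: supp_def lext_def)
  have "snd (lower R M) x y X = dlim_cls R M {w. w \<lless> y} (lext x y g)" by (simp add: lo_snd g_def)
  also have "\<dots> = dlim_cls R M {w. w \<lless> y} (dsum_ins M {w. w \<lless> y} x (pi {w. w \<lless> y} x (lext x y g)))"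
    by (rule collapse_cls[OF eg _ seg]) (use xy in simp)
  also have "pi {w. w \<lless> y} x (lext x y g) = pi {w. w \<lless> x} x g" by (rule pi_lext[OF xy' g sg])
  also have "\<dots> = lower_counit R M x X" by (simp add: cnt_def2 g_def)
  finally show "dlim_cls R M {w. w \<lless> y} (dsum_ins M {w. w \<lless> y} x (lower_counit R M x X)) = snd (lower R M) x y X" ..
next
  fix x y a assume xy: "x \<lless> y" and a: "a \<in> carrier (fst M x)"
  have ic: "dsum_ins M {w. w \<lless> y} x a \<in> carrier (dsum M {w. w \<lless> y})" by (rule ins_carrier) (use xy a in auto)
  show "lower_counit R M y (dlim_cls R M {w. w \<lless> y} (dsum_ins M {w. w \<lless> y} x a)) = snd M x y a"
    using counit(2)[OF ic] pi_ins[of x "{w. w \<lless> y}" y a] xy wb_le[OF xy] a by simp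
next
  fix x z y a assume xz: "x \<lless> z" and zy: "z \<le> y" and a: "a \<in> carrier (fst M x)"
  have ic: "dsum_ins M {w. w \<lless> z} x a \<in> carrier (dsum M {w. w \<lless> z})" by (rule ins_carrier) (use xz a in auto)
  show "snd (lower R M) z y (dlim_cls R M {w. w \<lless> z} (dsum_ins M {w. w \<lless> z} x a)) =
        dlim_cls R M {w. w \<lless> y} (dsum_ins M {w. w \<lless> y} x a)"
    using lower_map(2)[OF zy ic] lext_ins[OF xz zy] by simp
qed

end


theorem mainTheorem3:
  fixes R :: "'k ring" and M :: "('p::order, 'k, 'm) pmod"
  assumes "continuous_poset TYPE('p)"
    and "cring R"
    and "pers_mod R M"
  shows "pm_isomorphic R (upper (upper M)) (upper M)
       \<and> pm_isomorphic R (lower R (lower R M)) (lower R M)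
       \<and> pm_isomorphic R (upper (lower R M)) (upper M)
       \<and> pm_isomorphic R (lower R (upper M)) (lower R M)
       \<and> upper_semicont R (upper M)
       \<and> lower_semicont R (lower R M)"
proof -
  interpret cpm R M by (intro cpm.intro pm.intro cpm_axioms.intro assms)
  interpret U: interl R M "upper M" "upper_unit M" "\<lambda>x y f. f y" by (rule eta_interl)
  interpret E: interl R "lower R M" M "lower_counit R M"
    "\<lambda>x y a. dlim_cls R M {w. w \<lless> y} (dsum_ins M {w. w \<lless> y} x a)" by (rule eps_interl)
  have pmU: "pm R (upper M)" by (rule upper_is_pm)
  have pmL: "pm R (lower R M)" by (rule cpm.axioms(1)[OF cpm_lower])
  have pmLL: "pm R (lower R (lower R M))" by (rule cpm.axioms(1)[OF E.A.cpm_lower])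
  have c1: "upper_semicont R (upper M)" unfolding upper_semicont_def
  proof (rule iso_cong[OF pmU U.up_iso])
    fix p f assume f: "f \<in> carrier (fst (upper M) p)"
    show "upper_unit (upper M) p f = U.umap p f"
    proof (rule ext)
      fix x show "upper_unit (upper M) p f x = U.umap p f x"
      proof (cases "p \<lless> x")
        case True
        show ?thesis
        proof (rule ext)
          fix y show "upper_unit (upper M) p f x y = U.umap p f x y"
          proof (cases "x \<lless> y")
            case xy: True
            have py: "p \<lless> y" using True xy wb_wb by blast
            have "snd M x y (f x) = f y" using f True py wb_le[OF xy] by (simp add: up_fst il_carrier)
            then show ?thesis using True xy by (simp add: upper_unit_def U.umap_def up_snd)
          next
            case False then show ?thesis using True by (simp add: upper_unit_def U.umap_def up_snd)
          qed
        qed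
      next
        case False then show ?thesis by (simp add: upper_unit_def U.umap_def)
      qed
    qed
  qed
  have c2: "pm_isomorphic R (upper (upper M)) (upper M)"
    unfolding pm_isomorphic_def using iso_inv[OF pmU c1[unfolded upper_semicont_def]] by blast
  have c3: "pm_isomorphic R (upper (lower R M)) (upper M)"
    unfolding pm_isomorphic_def using E.up_iso by blast
  have c4: "pm_isomorphic R (lower R (upper M)) (lower R M)"
    unfolding pm_isomorphic_def using iso_inv[OF pmL U.lo_iso] by blast
  have c6: "pm_isomorphic R (lower R (lower R M)) (lower R M)"
    unfolding pm_isomorphic_def using E.lo_iso by blast
  have c5: "lower_semicont R (lower R M)" unfolding lower_semicont_def
  proof (rule iso_cong[OF pmLL E.lo_iso])
    fix p X assume X: "X \<in> carrier (fst (lower R (lower R M)) p)"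
    let ?J = "{x. x \<lless> p}"
    define G where "G = rep X"
    have G: "G \<in> carrier (dsum (lower R M) ?J)" and XG: "X = dlim_cls R (lower R M) ?J G"
      using E.A.lo_carrier[OF X] unfolding G_def by auto
    obtain z where z: "z \<lless> p" "\<forall>x\<in>E.A.supp ?J G. x \<le> z"
      using dir_bound[OF dirJ E.A.ds_carrierD(3)[OF G] E.A.supp_sub] by auto
    have sG: "E.A.supp ?J G \<subseteq> {x. x \<le> z}" using z by blast
    define Y where "Y = E.A.pi ?J z G"
    have Y: "Y \<in> carrier (fst (lower R M) z)" unfolding Y_def by (rule E.A.pi_closed[OF G sG])
    have X2: "X = dlim_cls R (lower R M) ?J (dsum_ins (lower R M) ?J z Y)"
      using XG E.A.collapse_cls[OF G _ sG] z(1) unfolding Y_def by simp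
    have ic: "dsum_ins (lower R M) ?J z Y \<in> carrier (dsum (lower R M) ?J)"
      by (rule E.A.ins_carrier) (use z Y in auto)
    have "lower_counit R (lower R M) p X = E.A.pi ?J p (dsum_ins (lower R M) ?J z Y)"
      unfolding X2 by (rule E.A.counit(2)[OF ic])
    also have "\<dots> = snd (lower R M) z p Y" by (rule E.A.pi_ins) (use z Y wb_le in auto)
    also have "\<dots> = dlim_cls R M ?J (dsum_ins M ?J z (lower_counit R M z Y))"
      by (rule E.psi_phi[OF z(1) Y, symmetric])
    also have "\<dots> = dlim_cls R M ?J (E.Phi p (dsum_ins (lower R M) ?J z Y))"
      using E.Phi_ins z(1) by simp
    also have "\<dots> = E.lmap p X" unfolding X2 by (rule E.lmap(2)[OF ic, symmetric])
    finally show "lower_counit R (lower R M) p X = E.lmap p X" .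
  qed
  show ?thesis using c1 c2 c3 c4 c5 c6 by blast
qed


end
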